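(* In the standing construction, let $\lambda_2=2/n$. Every weakly reduced diagram over $\langle\mathfrak A\mid\mathcal R\rangle$, equipped with its special selection, satisfies the condition $\mathcal B(\lambda_1,\lambda_2)$.
   Context: Standing construction: Fix an integer $n\ge 63$ and a real number $\lambda_1$ with $0<\lambda_1<1$ and $\bigl(4+\frac{2n\lambda_1}{1-\lambda_1}\bigr)\lambda_1\le\frac1n$. Let $\mathfrak A=\{x_1,\dots,x_n\}$. A group word over $\mathfrak A$ (a word in the letters $x_i^{\pm1}$) is called regular if it has the form $x_1^{k_1}x_2^{k_2}\cdots x_n^{k_n}$ with $k_i\in\mathbb Z$; $|w|$ denotes word length. Fix a total order on the set of reduced group words over $\mathfrak A$ which is order-isomorphic to $\mathbb N$. Define sets $\mathcal R_0\subseteq\mathcal R_1\subseteq\cdots$ inductively: $\mathcal R_0=\emptyset$; for $i>0$, if every group word over $\mathfrak A$ is equal to some regular word in the group $\langle\mathfrak A\mid\mathcal R_{i-1}\rangle$, put $\mathcal R_i=\mathcal R_{i-1}$ (and $w_i,m_i,r_i$ are undefined); otherwise let $w_i$ be the least (in the fixed order) reduced group word that does not start with $x_1^{\pm1}$, does not end with $x_n^{\pm1}$, and is not equal in $\langle\mathfrak A\mid\mathcal R_{i-1}\rangle$ to any regular word; choose a positive integer $m_i$ such that (a) $m_i\ne m_j$ for every $j<i$ for which $m_j$ is defined, (b) $nm_i+|w_i|\ge nm_j+|w_j|$ for every such $j<i$, (c) $\lambda_1(nm_i+|w_i|)\ge|w_i|$; set $r_i=x_1^{m_i}x_2^{m_i}\cdots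 x_n^{m_i}w_i^{-1}$ and $\mathcal R_i=\mathcal R_{i-1}\cup\{r_i\}$. Let $\mathcal R=\bigcup_{i\ge0}\mathcal R_i$, let $G=\langle\mathfrak A\mid\mathcal R\rangle$, and let $a_i\in G$ be the image of $x_i$. The statement is asserted for every choice of the order and of the $m_i$ satisfying (a)–(c). Diagrams: a map is a connected subcomplex of an oriented combinatorial 2-sphere together with a set of cycles (its contours) such that each oriented edge lies in the boundary cycle of a face or in a contour; a diagram over $\langle\mathfrak A\mid\mathcal R\rangle$ is a map whose oriented edges are labelled by letters of $\mathfrak A^{\pm1}$ (mutually inverse oriented edges get inverse labels) so that the contour $\partial\Pi$ of each face $\Pi$ (oriented counterclockwise) has a representative cyclic path labelled by an element of $\mathcal R^{\pm1}$; $|\partial\Pi|$ is its length. A pair of distinct faces $\{\Pi_1,\Pi_2\}$ is immediately cancellable if there are paths $p_1,p_2$ with a nontrivial common initial subpath, $\langle p_1\rangle=\partial\Pi_1$, $\langle p_2^{-1}\rangle=\partial\Pi_2$ and equal labels; a diagram is weakly reduced if it has no such pair. A selection on a diagram is a set of nontrivial reduced subpaths of contours of faces closed under taking nontrivial subpaths; paths in it are selected; a path $p$ is double-selected if $p$ and $p^{-1}$ are both selected. The special selection: for each face $\Pi$, write $\partial\Pi=\langle st\rangle$ where $\ell(s)=x_1^{m}x_2^{m}\cdots x_n^{m}$ or $x_n^{-m}\cdots x_1^{-m}$ for some $m\in\mathbb N$ and $|s|>\frac{n}{2n-2}|\partial\Pi|$ (this $s$ is the part of $r_j^{\pm1}$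 corresponding to $x_1^{m_j}\cdots x_n^{m_j}$); the selected subpaths of $\partial\Pi$ are exactly the nontrivial subpaths of $s$. An oriented arc is a simple path all of whose intermediate vertices have degree $2$; an arc is a pair of mutually inverse oriented arcs; an arc is double-selected if both its oriented arcs are selected, and is incident to $\Pi$ if one of its oriented arcs is a subpath of $\partial\Pi$. For $\lambda_1,\lambda_2\in[0,1]$, a diagram with selection satisfies $\mathcal B(\lambda_1,\lambda_2)$ if for each face $\Pi$: ($\mathcal B_0$) $\partial\Pi$ has at least one selected subpath and at most one maximal selected subpath; ($\mathcal B_1$) some selected subpath of $\partial\Pi$ has length $\ge(1-\lambda_1)|\partial\Pi|$; ($\mathcal B_2$) every double-selected arc incident to $\Pi$ has length $\le\lambda_2|\partial\Pi|$. *)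

theory Defs
  imports Main "HOL.Real"
begin

section \<open>Group words over the alphabet x_1, ..., x_n\<close>

text \<open>A letter (i, True) stands for x_i, a letter (i, False) for x_i^{-1}.\<close>
type_synonym letter = "nat \<times> bool"

definition inv_letter :: "letter \<Rightarrow> letter" where
  "inv_letter a = (fst a, \<not> snd a)"

definition inv_word :: "letter list \<Rightarrow> letter list" where
  "inv_word w = rev (map inv_letter w)"

definition is_word :: "nat \<Rightarrow> letter list \<Rightarrow> bool" where
  "is_word n w \<longleftrightarrow> (\<forall>a\<in>set w. 1 \<le> fst a \<and> fst a \<le> n)"

definition reduced_word :: "letter list \<Rightarrow> bool" where
  "reduced_word w \<longleftrightarrow> (\<forall>i. Suc i < length w \<longrightarrow> w ! Suc i \<noteq> inv_letter (w ! i))"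

definition gen_pow :: "nat \<Rightarrow> int \<Rightarrow> letter list" where
  "gen_pow i k = (if 0 \<le> k then replicate (nat k) (i, True) else replicate (nat (- k)) (i, False))"

definition regular_word :: "nat \<Rightarrow> letter list \<Rightarrow> bool" where
  "regular_word n w \<longleftrightarrow> (\<exists>k :: nat \<Rightarrow> int. w = concat (map (\<lambda>i. gen_pow i (k i)) [1..<Suc n]))"

definition block_word :: "nat \<Rightarrow> nat \<Rightarrow> letter list" where
  "block_word n m = concat (map (\<lambda>i. replicate m (i, True)) [1..<Suc n])"

definition relator :: "nat \<Rightarrow> nat \<Rightarrow> letter list \<Rightarrow> letter list" where
  "relator n m w = block_word n m @ inv_word w"

text \<open>Equality of words in the group presented by the relators R: the equivalence
  closure of deleting a cancelling pair a a^{-1} or an occurrence of a relator.\<close>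
definition elem_step :: "letter list set \<Rightarrow> letter list \<Rightarrow> letter list \<Rightarrow> bool" where
  "elem_step R u v \<longleftrightarrow>
     (\<exists>x y a. u = x @ [a, inv_letter a] @ y \<and> v = x @ y) \<or>
     (\<exists>x y r. r \<in> R \<and> u = x @ r @ y \<and> v = x @ y)"

definition grp_eq :: "letter list set \<Rightarrow> letter list \<Rightarrow> letter list \<Rightarrow> bool" where
  "grp_eq R u v \<longleftrightarrow> (\<lambda>x y. elem_step R x y \<or> elem_step R y x)\<^sup>*\<^sup>* u v"

definition all_regular :: "nat \<Rightarrow> letter list set \<Rightarrow> bool" where
  "all_regular n R \<longleftrightarrow> (\<forall>u. is_word n u \<longrightarrow> (\<exists>v. regular_word n v \<and> grp_eq R u v))"

definition candidate :: "nat \<Rightarrow> letter list set \<Rightarrow> letter list \<Rightarrow> bool" where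
  "candidate n R w \<longleftrightarrow> is_word n w \<and> reduced_word w \<and>
     (w \<noteq> [] \<longrightarrow> fst (hd w) \<noteq> 1 \<and> fst (last w) \<noteq> n) \<and>
     \<not> (\<exists>v. regular_word n v \<and> grp_eq R w v)"

text \<open>The fixed order on reduced words, order-isomorphic to
  the naturals, is given by its enumeration enum (enum k is the k-th word).
  Rs i = R_i; dfd i says whether w_i, m_i, r_i are defined; ws i = w_i; ms i = m_i.\<close>
definition standing_construction ::
  "nat \<Rightarrow> real \<Rightarrow> (nat \<Rightarrow> letter list) \<Rightarrow> (nat \<Rightarrow> letter list set) \<Rightarrow> (nat \<Rightarrow> bool)
     \<Rightarrow> (nat \<Rightarrow> letter list) \<Rightarrow> (nat \<Rightarrow> nat) \<Rightarrow> bool" where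
  "standing_construction n l1 enum Rs dfd ws ms \<longleftrightarrow>
     bij_betw enum UNIV {w. is_word n w \<and> reduced_word w} \<and>
     Rs 0 = {} \<and> \<not> dfd 0 \<and>
     (\<forall>i>0.
        (all_regular n (Rs (i - 1)) \<longrightarrow> \<not> dfd i \<and> Rs i = Rs (i - 1)) \<and>
        (\<not> all_regular n (Rs (i - 1)) \<longrightarrow>
           dfd i \<and>
           candidate n (Rs (i - 1)) (ws i) \<and>
           (\<exists>k. enum k = ws i \<and> (\<forall>k'<k. \<not> candidate n (Rs (i - 1)) (enum k'))) \<and>
           0 < ms i \<and>
           (\<forall>j<i. dfd j \<longrightarrow> ms i \<noteq> ms j \<and>
                 n * ms j + length (ws j) \<le> n * ms i + length (ws i)) \<and>
           real (length (ws i)) \<le> l1 * real (n * ms i + length (ws i)) \<and>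
           Rs i = insert (relator n (ms i) (ws i)) (Rs (i - 1))))"

section \<open>Maps and diagrams (combinatorial maps on the sphere)\<close>

text \<open>A map is given by a finite set D of oriented edges (darts), the edge reversal rv
  (fixed-point-free involution, e to e^{-1}), and the permutation nx sending an oriented
  edge to the next one along the boundary cycle of the region (face or hole) it bounds.
  Vertices are the orbits of the rotation e to nx (rv e); the tail of e is its orbit.
  Genus 0 is expressed by Euler's formula V - E + F = 2 (F counting all regions), plus
  connectedness.  FD is the set of darts lying on boundaries of faces; the remaining
  regions are the holes, whose boundary cycles are the contours of the map.\<close>

definition orbit :: "('d \<Rightarrow> 'd) \<Rightarrow> 'd \<Rightarrow> 'd set" where
  "orbit f e = {(f ^^ k) e | k. True}"

definition cyc_path :: "('d \<Rightarrow> 'd) \<Rightarrow> 'd \<Rightarrow> nat \<Rightarrow> 'd list" where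
  "cyc_path nx e l = map (\<lambda>t. (nx ^^ t) e) [0..<l]"

definition vtx :: "('d \<Rightarrow> 'd) \<Rightarrow> ('d \<Rightarrow> 'd) \<Rightarrow> 'd \<Rightarrow> 'd set" where
  "vtx rv nx e = orbit (\<lambda>x. nx (rv x)) e"

definition inv_path :: "('d \<Rightarrow> 'd) \<Rightarrow> 'd list \<Rightarrow> 'd list" where
  "inv_path rv p = rev (map rv p)"

definition is_map :: "'d set \<Rightarrow> ('d \<Rightarrow> 'd) \<Rightarrow> ('d \<Rightarrow> 'd) \<Rightarrow> 'd set \<Rightarrow> bool" where
  "is_map D rv nx FD \<longleftrightarrow>
     finite D \<and>
     (\<forall>e\<in>D. rv e \<in> D \<and> rv e \<noteq> e \<and> rv (rv e) = e) \<and>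
     bij_betw nx D D \<and>
     (\<forall>e\<in>D. \<forall>e'\<in>D. (\<lambda>x y. y = rv x \<or> y = nx x)\<^sup>*\<^sup>* e e') \<and>
     (D \<noteq> {} \<longrightarrow>
        int (card {vtx rv nx e | e. e \<in> D}) - int (card D div 2)
          + int (card {orbit nx e | e. e \<in> D}) = 2) \<and>
     FD \<subseteq> D \<and> (\<forall>e\<in>FD. nx e \<in> FD)"

text \<open>A diagram over the presentation with relators R: a map with labels lab on darts,
  inverse darts having inverse labels, and every face contour (read along nx,
  i.e. counterclockwise) having a cyclic representative labelled by an element of R^{+-1}.\<close>
definition is_diagram ::
  "nat \<Rightarrow> letter list set \<Rightarrow> 'd set \<Rightarrow> ('d \<Rightarrow> 'd) \<Rightarrow> ('d \<Rightarrow> 'd) \<Rightarrow> ('d \<Rightarrow> letter) \<Rightarrow> 'd set \<Rightarrow> bool" where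
  "is_diagram n R D rv nx lab FD \<longleftrightarrow>
     is_map D rv nx FD \<and>
     (\<forall>e\<in>D. 1 \<le> fst (lab e) \<and> fst (lab e) \<le> n \<and> lab (rv e) = inv_letter (lab e)) \<and>
     (\<forall>e\<in>FD. \<exists>e'\<in>orbit nx e.
        map lab (cyc_path nx e' (card (orbit nx e))) \<in> R \<union> inv_word ` R)"

text \<open>Faces are the nx-orbits of darts in FD; the face of e has contour the cyclic path
  cyc_path nx e (card (orbit nx e)).\<close>
definition weakly_reduced ::
  "'d set \<Rightarrow> ('d \<Rightarrow> 'd) \<Rightarrow> ('d \<Rightarrow> 'd) \<Rightarrow> ('d \<Rightarrow> letter) \<Rightarrow> 'd set \<Rightarrow> bool" where
  "weakly_reduced D rv nx lab FD \<longleftrightarrow>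
     \<not> (\<exists>e1\<in>FD. \<exists>e2\<in>FD. orbit nx e1 \<noteq> orbit nx e2 \<and>
          (let p1 = cyc_path nx e1 (card (orbit nx e1));
               p2 = inv_path rv (cyc_path nx e2 (card (orbit nx e2)))
           in p1 \<noteq> [] \<and> p2 \<noteq> [] \<and> hd p1 = hd p2 \<and> map lab p1 = map lab p2))"

definition contour_subpaths :: "('d \<Rightarrow> 'd) \<Rightarrow> 'd \<Rightarrow> 'd list set" where
  "contour_subpaths nx e =
     {cyc_path nx e' q | e' q. e' \<in> orbit nx e \<and> 0 < q \<and> q \<le> card (orbit nx e)}"

definition special_sel :: "nat \<Rightarrow> ('d \<Rightarrow> 'd) \<Rightarrow> ('d \<Rightarrow> letter) \<Rightarrow> 'd set \<Rightarrow> 'd list set" where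
  "special_sel n nx lab FD =
     {p. \<exists>e\<in>FD. \<exists>l m j q.
          l \<le> card (orbit nx e) \<and>
          real l > real n / (2 * real n - 2) * real (card (orbit nx e)) \<and>
          (map lab (cyc_path nx e l) = block_word n m \<or>
           map lab (cyc_path nx e l) = inv_word (block_word n m)) \<and>
          0 < q \<and> j + q \<le> l \<and> p = cyc_path nx ((nx ^^ j) e) q}"

definition is_subpath :: "'d list \<Rightarrow> 'd list \<Rightarrow> bool" where
  "is_subpath p q \<longleftrightarrow> (\<exists>a b. q = a @ p @ b)"

text \<open>Oriented arc: a nontrivial simple path (vertices pairwise distinct, except that
  the initial and terminal vertex may coincide) all of whose intermediate vertices
  have degree 2 (degree = number of darts with tail at the vertex).\<close>
definition oriented_arc :: "'d set \<Rightarrow> ('d \<Rightarrow> 'd) \<Rightarrow> ('d \<Rightarrow> 'd) \<Rightarrow> 'd list \<Rightarrow> bool" where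
  "oriented_arc D rv nx p \<longleftrightarrow>
     p \<noteq> [] \<and> set p \<subseteq> D \<and>
     (\<forall>i. Suc i < length p \<longrightarrow> vtx rv nx (rv (p ! i)) = vtx rv nx (p ! Suc i)) \<and>
     distinct (map (vtx rv nx) p) \<and> distinct (map (\<lambda>e. vtx rv nx (rv e)) p) \<and>
     (\<forall>i. Suc i < length p \<longrightarrow> card (vtx rv nx (rv (p ! i))) = 2)"

definition cond_B ::
  "real \<Rightarrow> real \<Rightarrow> 'd set \<Rightarrow> ('d \<Rightarrow> 'd) \<Rightarrow> ('d \<Rightarrow> 'd) \<Rightarrow> 'd set \<Rightarrow> 'd list set \<Rightarrow> bool" where
  "cond_B l1 l2 D rv nx FD S \<longleftrightarrow>
     (\<forall>e\<in>FD.
        (\<exists>p. p \<in> S \<and> p \<in> contour_subpaths nx e) \<and>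
        (\<forall>p q. (p \<in> S \<and> p \<in> contour_subpaths nx e \<and>
                 \<not> (\<exists>p'. p' \<in> S \<and> p' \<in> contour_subpaths nx e \<and> p' \<noteq> p \<and> is_subpath p p')) \<and>
               (q \<in> S \<and> q \<in> contour_subpaths nx e \<and>
                 \<not> (\<exists>q'. q' \<in> S \<and> q' \<in> contour_subpaths nx e \<and> q' \<noteq> q \<and> is_subpath q q'))
               \<longrightarrow> p = q) \<and>
        (\<exists>p. p \<in> S \<and> p \<in> contour_subpaths nx e \<and>
             real (length p) \<ge> (1 - l1) * real (card (orbit nx e))) \<and>
        (\<forall>p. oriented_arc D rv nx p \<and> p \<in> S \<and> inv_path rv p \<in> S \<and>
             (p \<in> contour_subpaths nx e \<or> inv_path rv p \<in> contour_subpaths nx e)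
             \<longrightarrow> real (length p) \<le> l2 * real (card (orbit nx e))))"

end

theory Submission
  imports Defs
begin

lemma funpow_cancel:
  assumes "inj_on f D" "f ` D \<subseteq> D" "e \<in> D"
    and "(f ^^ i) e = (f ^^ (i + d)) e"
  shows "(f ^^ d) e = e"
  using assms(4)
proof (induction i)
  case 0 then show ?case by simp
next
  case (Suc i)
  have inD: "\<And>k. (f ^^ k) e \<in> D"
  proof -
    fix k show "(f ^^ k) e \<in> D" by (induction k) (use assms in auto)
  qed
  have "f ((f ^^ i) e) = f ((f ^^ (i + d)) e)" using Suc.prems by simp
  then have "(f ^^ i) e = (f ^^ (i + d)) e"
    using inj_onD[OF assms(1)] inD by blast
  then show ?case using Suc.IH by simp
qed

lemma funpow_inD:
  assumes "f ` D \<subseteq> D" "e \<in> D" shows "(f ^^ k) e \<in> D"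
  by (induction k) (use assms in auto)

lemma period_exists:
  assumes "finite D" "inj_on f D" "f ` D \<subseteq> D" "e \<in> D"
  shows "\<exists>P>0. (f ^^ P) e = e"
proof -
  have "\<not> inj_on (\<lambda>i. (f ^^ i) e) {..card D}"
  proof
    assume inj: "inj_on (\<lambda>i. (f ^^ i) e) {..card D}"
    have "(\<lambda>i. (f ^^ i) e) ` {..card D} \<subseteq> D" using funpow_inD[OF assms(3,4)] by auto
    then have "card ((\<lambda>i. (f ^^ i) e) ` {..card D}) \<le> card D" using assms(1) card_mono by blast
    moreover have "card ((\<lambda>i. (f ^^ i) e) ` {..card D}) = Suc (card D)" using card_image[OF inj] by simp
    ultimately show False by simp
  qed
  then obtain i j where ij: "i \<noteq> j" "(f ^^ i) e = (f ^^ j) e" unfolding inj_on_def by blast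
  show ?thesis
  proof (cases "i < j")
    case True
    then have "(f ^^ i) e = (f ^^ (i + (j - i))) e" using ij by simp
    then have "(f ^^ (j - i)) e = e" by (rule funpow_cancel[OF assms(2,3,4)])
    then show ?thesis using True by (intro exI[of _ "j - i"]) simp
  next
    case False
    then have "(f ^^ j) e = (f ^^ (j + (i - j))) e" using ij by simp
    then have "(f ^^ (i - j)) e = e" by (rule funpow_cancel[OF assms(2,3,4)])
    then show ?thesis using False ij by (intro exI[of _ "i - j"]) simp
  qed
qed

lemma orbit_props:
  assumes "finite D" "inj_on f D" "f ` D \<subseteq> D" "e \<in> D"
  shows "0 < card (orbit f e) \<and> (f ^^ card (orbit f e)) e = e"
proof -
  define P where "P = (LEAST P. 0 < P \<and> (f ^^ P) e = e)"
  have P: "0 < P \<and> (f ^^ P) e = e"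
    unfolding P_def using period_exists[OF assms] by (metis (mono_tags, lifting) LeastI)
  have Pmin: "\<And>Q. 0 < Q \<Longrightarrow> Q < P \<Longrightarrow> (f ^^ Q) e \<noteq> e"
    unfolding P_def using not_less_Least by blast
  have orb: "orbit f e = (\<lambda>i. (f ^^ i) e) ` {..<P}"
  proof
    show "orbit f e \<subseteq> (\<lambda>i. (f ^^ i) e) ` {..<P}"
    proof
      fix x assume "x \<in> orbit f e"
      then obtain k where "x = (f ^^ k) e" unfolding orbit_def by auto
      then have "x = (f ^^ (k mod P)) e" using funpow_mod_eq P by metis
      then show "x \<in> (\<lambda>i. (f ^^ i) e) ` {..<P}" using P by auto
    qed
  next
    show "(\<lambda>i. (f ^^ i) e) ` {..<P} \<subseteq> orbit f e" unfolding orbit_def by auto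
  qed
  have inj: "inj_on (\<lambda>i. (f ^^ i) e) {..<P}"
  proof (rule inj_onI)
    fix i j assume ij: "i \<in> {..<P}" "j \<in> {..<P}" "(f ^^ i) e = (f ^^ j) e"
    show "i = j"
    proof (rule ccontr)
      assume "i \<noteq> j"
      then consider "i < j" | "j < i" by linarith
      then show False
      proof cases
        case 1
        then have "(f ^^ i) e = (f ^^ (i + (j - i))) e" using ij by simp
        then have "(f ^^ (j - i)) e = e" by (rule funpow_cancel[OF assms(2,3,4)])
        then show False using Pmin[of "j - i"] 1 ij by (auto simp: less_imp_diff_less)
      next
        case 2
        then have "(f ^^ j) e = (f ^^ (j + (i - j))) e" using ij by simp
        then have "(f ^^ (i - j)) e = e" by (rule funpow_cancel[OF assms(2,3,4)])
        then show False using Pmin[of "i - j"] 2 ij by (auto simp: less_imp_diff_less)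
      qed
    qed
  qed
  have "card (orbit f e) = P" using orb card_image[OF inj] by simp
  then show ?thesis using P by simp
qed

lemma div_lt_n: "0 < (m::nat) \<Longrightarrow> i < n * m \<Longrightarrow> i div m < n"
  by (simp add: div_less_iff_less_mult)

lemma window_unique:
  fixes c g :: "nat \<Rightarrow> 'a"
  assumes cb: "\<forall>x<n*M. c x = g (x div M)"
    and cw: "\<forall>i<n*m. c ((t+i) mod L) = g (i div m)"
    and ginj: "inj_on g {..<n}"
    and clast: "c (L-1) \<noteq> g 0"
    and n3: "3 \<le> n" and Mm: "M < n*m" and mL: "n*m \<le> L" and kL: "L - n*M < n*m"
    and nML: "n*M < L" and tL: "t < L" and M0: "0<M" and m0: "0<m"
  shows "t = 0 \<and> m = M"
proof -
  have geq: "\<And>a b. a < n \<Longrightarrow> b < n \<Longrightarrow> g a = g b \<Longrightarrow> a = b"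
    using ginj unfolding inj_on_def by blast
  have wdiv: "\<And>i. i < n*m \<Longrightarrow> i div m < n" using div_lt_n m0 by blast
  have nM2: "2 * M \<le> n * M" using n3 by (intro mult_le_mono1) simp
  have nm3: "3 * m \<le> n * m" using n3 by (intro mult_le_mono1) simp
  have c0: "c 0 = g 0" using cb M0 n3 by simp
  have MnM: "M < n*M" using nM2 M0 by linarith
  have MLt: "M < L" using MnM nML by linarith
  have cM: "c M = g 1"
  proof -
    have "c M = g (M div M)" using cb MnM by blast
    then show ?thesis using M0 by simp
  qed
  consider "n*M \<le> t" | "0 < t" "t < n*M" | "t = 0" by linarith
  then show ?thesis
  proof cases
    case 1
    define d where "d = L - t"
    have d1: "1 \<le> d" "d < n*m" using tL 1 kL unfolding d_def by auto
    have "(t + d) mod L = 0" unfolding d_def using tL by simp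
    then have "g (d div m) = g 0" using cw d1 c0 by metis
    then have "d div m = 0" using geq wdiv d1 n3 by simp
    then have dm: "d - 1 < m" using m0 d1 by (simp add: div_eq_0_iff)
    have "(t + (d - 1)) mod L = L - 1" unfolding d_def using tL d1 unfolding d_def by simp
    then have "c (L - 1) = g ((d-1) div m)" using cw d1 by (metis less_imp_diff_less)
    also have "(d-1) div m = 0" using dm by simp
    finally show ?thesis using clast by simp
  next
    case 2
    have "c t = g (t div M)" using cb 2 by simp
    moreover have "c t = g 0"
    proof -
      have "0 < n*m" using Mm by linarith
      then have "c ((t+0) mod L) = g (0 div m)" using cw by blast
      then show ?thesis using tL by simp
    qed
    moreover have "t div M < n" using div_lt_n[OF M0] 2 by (simp add: mult.commute)
    ultimately have "t div M = 0" using geq[of "t div M" 0] n3 by simp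
    then have tM: "t < M" using M0 by (simp add: div_eq_0_iff)
    have i1: "M - t < n*m" using Mm by simp
    have e1: "(t + (M - t)) mod L = M" using tM MLt by simp
    have "g ((M - t) div m) = g 1" using cw[rule_format, OF i1] cM unfolding e1 by simp
    then have A: "(M - t) div m = 1" using geq[of "(M-t) div m" 1] wdiv[OF i1] n3 by simp
    have i0: "M - t - 1 < n*m" using i1 by simp
    have e0: "(t + (M - t - 1)) mod L = M - 1" using tM 2 MLt by simp
    have "M - 1 < n*M" using MnM by linarith
    moreover have "(M - 1) div M = 0" using M0 by simp
    ultimately have "c (M - 1) = g 0" using cb by metis
    then have "g ((M - t - 1) div m) = g 0" using cw[rule_format, OF i0] unfolding e0 by simp
    then have B: "(M - t - 1) div m = 0" using geq[of "(M - t - 1) div m" 0] wdiv[OF i0] n3 by simp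
    have "\<not> (M - t < m)"
    proof
      assume "M - t < m" then have "(M - t) div m = 0" by simp
      then show False using A by simp
    qed
    moreover have "M - t - 1 < m" using B m0 by (simp add: div_eq_0_iff)
    ultimately have mt: "m = M - t" by linarith
    have i2: "2*m < n*m" using nm3 m0 by linarith
    have "2*M - t < n*M" using nM2 2 by linarith
    moreover have "t + 2*m = 2*M - t" using mt tM by linarith
    ultimately have e2: "(t + 2*m) mod L = 2*M - t" using nML by simp
    have "c (2*M - t) = g 1"
    proof -
      have "(2*M - t) div M = 1" using tM 2 by (intro div_nat_eqI) auto
      moreover have "2*M - t < n*M" using nM2 2 by linarith
      ultimately show ?thesis using cb by metis
    qed
    then have "g (2*m div m) = g 1" using cw[rule_format, OF i2] unfolding e2 by simp
    then have "g 2 = g 1" using m0 by simp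
    then show ?thesis using geq[of 2 1] n3 by simp
  next
    case 3
    have "m = M"
    proof (rule ccontr)
      assume "m \<noteq> M"
      then consider "M < m" | "m < M" by linarith
      then show False
      proof cases
        case 1
        have "c ((0 + M) mod L) = g (M div m)" using cw Mm 3 by blast
        then have "c M = g (M div m)" using MLt by simp
        then have "g 1 = g 0" using cM 1 by simp
        then show False using geq[of 1 0] n3 by simp
      next
        case 2
        have mn: "m < n*m" using nm3 m0 by linarith
        have "c ((0 + m) mod L) = g (m div m)" using cw mn 3 by blast
        moreover have "m < L" using mn mL by linarith
        ultimately have "c m = g (m div m)" by simp
        moreover have "c m = g 0" using cb[rule_format, of m] 2 MnM by simp
        ultimately have "g 1 = g 0" using m0 by simp
        then show False using geq[of 1 0] n3 by simp
      qed
    qed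
    then show ?thesis using 3 by simp
  qed
qed

lemma window_count:
  fixes c :: "nat \<Rightarrow> 'a"
  assumes cb: "\<forall>x<N. P (c x)"
    and cw: "\<forall>i<l. \<not> P (c ((t+i) mod L))"
    and lL: "l \<le> L" and kl: "L - N < l"
  shows False
proof -
  have inj: "inj_on (\<lambda>i. (t+i) mod L) {..<l}"
  proof (rule inj_onI)
    fix i j assume ij: "i \<in> {..<l}" "j \<in> {..<l}" "(t+i) mod L = (t+j) mod L"
    have key: "\<And>a b. a < l \<Longrightarrow> b < l \<Longrightarrow> a \<le> b \<Longrightarrow> (t+b) mod L = (t+a) mod L \<Longrightarrow> a = b"
    proof -
      fix a b assume ab: "a < l" "b < l" "a \<le> b" "(t+b) mod L = (t+a) mod L"
      then have "L dvd (t+b) - (t+a)" using mod_eq_dvd_iff_nat[of "t+a" "t+b" L] by simp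
      then have "L dvd b - a" by simp
      moreover have "b - a < L" using ab lL by linarith
      ultimately have "b - a = 0" using dvd_imp_le by (metis gr0I leD)
      then show "a = b" using ab by simp
    qed
    show "i = j"
    proof (cases "i \<le> j")
      case True then show ?thesis using key[of i j] ij by simp
    next
      case False then show ?thesis using key[of j i] ij by simp
    qed
  qed
  have sub: "(\<lambda>i. (t+i) mod L) ` {..<l} \<subseteq> {N..<L}"
  proof
    fix x assume "x \<in> (\<lambda>i. (t+i) mod L) ` {..<l}"
    then obtain i where i: "i < l" "x = (t+i) mod L" by auto
    have "L > 0" using i lL by simp
    then have "x < L" using i by simp
    moreover have "\<not> x < N" using cb cw i by auto
    ultimately show "x \<in> {N..<L}" by simp
  qed
  have "l \<le> card {N..<L}" using card_mono[OF _ sub] card_image[OF inj] by simp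
  then show False using kl by simp
qed

lemma inv_inv_letter[simp]: "inv_letter (inv_letter z) = z"
  by (simp add: inv_letter_def)

lemma fst_inv_letter[simp]: "fst (inv_letter z) = fst z" and snd_inv_letter[simp]: "snd (inv_letter z) = (\<not> snd z)"
  by (simp_all add: inv_letter_def)

lemma length_inv_word[simp]: "length (inv_word w) = length w"
  by (simp add: inv_word_def)

lemma inv_word_nth: "i < length w \<Longrightarrow> inv_word w ! i = inv_letter (w ! (length w - 1 - i))"
  by (simp add: inv_word_def rev_nth)

lemma inv_word_append: "inv_word (u @ v) = inv_word v @ inv_word u"
  by (simp add: inv_word_def)

lemma inv_word_inv_word[simp]: "inv_word (inv_word w) = w"
  by (simp add: inv_word_def rev_map comp_def)

lemma block_word_map: "block_word n m = map (\<lambda>x. (Suc (x div m), True)) [0..<n*m]"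
proof (induction n)
  case 0 then show ?case by (simp add: block_word_def)
next
  case (Suc n)
  have "block_word (Suc n) m = block_word n m @ replicate m (Suc n, True)"
    by (simp add: block_word_def)
  also have "replicate m (Suc n, True) = map (\<lambda>x. (Suc (x div m), True)) [n*m..<n*m+m]"
  proof (rule nth_equalityI)
    show "length (replicate m (Suc n, True)) = length (map (\<lambda>x. (Suc (x div m), True)) [n*m..<n*m+m])" by simp
  next
    fix i assume "i < length (replicate m (Suc n, True))"
    then have i: "i < m" by simp
    have "(n*m + i) div m = n" using i by (simp add: div_nat_eqI mult.commute)
    then show "replicate m (Suc n, True) ! i = map (\<lambda>x. (Suc (x div m), True)) [n*m..<n*m+m] ! i"
      using i by simp
  qed
  also have "block_word n m @ map (\<lambda>x. (Suc (x div m), True)) [n*m..<n*m+m]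
      = map (\<lambda>x. (Suc (x div m), True)) [0..<Suc n*m]"
  proof -
    have "[0..<n*m+m] = [0..<n*m] @ [n*m..<n*m+m]" by (rule upt_add_eq_append) simp
    moreover have "Suc n * m = n*m+m" by simp
    ultimately have "map (\<lambda>x. (Suc (x div m), True)) [0..<Suc n*m] = map (\<lambda>x. (Suc (x div m), True)) [0..<n*m] @ map (\<lambda>x. (Suc (x div m), True)) [n*m..<n*m+m]"
      by (simp only: map_append)
    then show ?thesis using Suc.IH by simp
  qed
  finally show ?case .
qed

lemma length_block_word[simp]: "length (block_word n m) = n * m"
  by (simp add: block_word_map)

lemma div_rev_aux:
  assumes m0: "0 < (m::nat)" and x: "x < n*m"
  shows "Suc ((n*m - 1 - x) div m) = n - x div m"
proof -
  define a where "a = x div m"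
  define s where "s = x mod m"
  have xs: "x = a*m + s" unfolding a_def s_def by simp
  have sm: "s < m" unfolding s_def using m0 by simp
  have an: "a < n" unfolding a_def using x m0 by (simp add: div_less_iff_less_mult)
  then obtain c where c: "n = Suc (a + c)" by (metis add_Suc less_imp_Suc_add)
  have nm: "n*m = m + a*m + c*m" using c by (simp add: algebra_simps)
  have e: "n*m - 1 - x = (m - 1 - s) + c*m" using nm xs sm by simp
  have "((m - 1 - s) + c*m) div m = c + (m - 1 - s) div m" using div_mult_self1[of m "m-1-s" c] m0 by simp
  then have "(n*m - 1 - x) div m = c" unfolding e using sm by simp
  then show ?thesis using c a_def by simp
qed

lemma inv_block_map: "inv_word (block_word n m) = map (\<lambda>x. (n - x div m, False)) [0..<n*m]"
proof (rule nth_equalityI)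
  show "length (inv_word (block_word n m)) = length (map (\<lambda>x. (n - x div m, False)) [0..<n*m])" by simp
next
  fix x assume "x < length (inv_word (block_word n m))"
  then have x: "x < n*m" by simp
  then have m0: "0 < m" by (cases m) auto
  have "inv_word (block_word n m) ! x = inv_letter (block_word n m ! (n*m - 1 - x))"
    using x by (simp add: inv_word_nth)
  also have "\<dots> = (Suc ((n*m - 1 - x) div m), False)"
  proof -
    have "n*m - 1 - x < n*m" using x by linarith
    then show ?thesis by (simp add: block_word_map inv_letter_def)
  qed
  also have "\<dots> = (n - x div m, False)" using div_rev_aux[OF m0 x] by simp
  finally show "inv_word (block_word n m) ! x = map (\<lambda>x. (n - x div m, False)) [0..<n*m] ! x"
    using x by simp
qed

lemma length_cyc[simp]: "length (cyc_path nx e l) = l"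
  by (simp add: cyc_path_def)

lemma cyc_nth[simp]: "i < l \<Longrightarrow> cyc_path nx e l ! i = (nx ^^ i) e"
  by (simp add: cyc_path_def)

lemma cyc_sub:
  assumes "j + q \<le> N"
  shows "is_subpath (cyc_path nx ((nx ^^ j) e) q) (cyc_path nx e N)"
proof -
  let ?f = "\<lambda>t. (nx ^^ t) e"
  have "[0..<N] = [0..<j] @ [j..<j+q] @ [j+q..<N]"
    using assms by (metis le_add1 le_add_same_cancel1 upt_add_eq_append zero_le add.assoc le_add_diff_inverse)
  then have "cyc_path nx e N = map ?f [0..<j] @ map ?f [j..<j+q] @ map ?f [j+q..<N]"
    unfolding cyc_path_def by simp
  moreover have "map ?f [j..<j+q] = cyc_path nx ((nx ^^ j) e) q"
  proof -
    have "[j..<j+q] = map (\<lambda>i. i + j) [0..<q]" by (simp add: map_add_upt add.commute)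
    then show ?thesis unfolding cyc_path_def by (simp add: funpow_add)
  qed
  ultimately show ?thesis unfolding is_subpath_def by metis
qed

lemma cyc_rot:
  assumes "(nx ^^ L) e = e"
  shows "cyc_path nx ((nx ^^ k) e) L = rotate k (cyc_path nx e L)"
proof (rule nth_equalityI)
  show "length (cyc_path nx ((nx ^^ k) e) L) = length (rotate k (cyc_path nx e L))" by simp
next
  fix i assume "i < length (cyc_path nx ((nx ^^ k) e) L)"
  then have i: "i < L" by simp
  have "rotate k (cyc_path nx e L) ! i = cyc_path nx e L ! ((k + i) mod L)"
    using i by (simp add: nth_rotate)
  also have "\<dots> = (nx ^^ ((k + i) mod L)) e" using i by simp
  also have "\<dots> = (nx ^^ (k + i)) e" using funpow_mod_eq[OF assms] by simp
  finally show "cyc_path nx ((nx ^^ k) e) L ! i = rotate k (cyc_path nx e L) ! i"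
    using i by (simp add: funpow_add add.commute)
qed

lemma wr_list_identity:
  assumes lB: "length B = N" and L: "L = N + length w" and a: "a < N" and i: "i < L"
  shows "inv_letter ((inv_word B @ w) ! ((L - 1 - i + N - a) mod L)) = (B @ inv_word w) ! ((a + i) mod L)"
proof -
  consider "a + i < N" | "N \<le> a + i" "a + i < L" | "L \<le> a + i" by linarith
  then show ?thesis
  proof cases
    case 1
    have "L - 1 - i + N - a = (N - 1 - (a+i)) + L" using 1 i L by linarith
    moreover have "N - 1 - (a+i) < L" using 1 L by linarith
    ultimately have y: "(L - 1 - i + N - a) mod L = N - 1 - (a+i)" by simp
    have x: "(a + i) mod L = a + i" using 1 L by simp
    show ?thesis unfolding x y using 1 lB by (simp add: nth_append inv_word_nth)
  next
    case 2
    have y: "(L - 1 - i + N - a) mod L = N + (L - 1 - (a+i))" using 2 L by simp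
    have x: "(a + i) mod L = a + i" using 2 by simp
    have k: "length w - 1 - (a + i - N) = L - 1 - (a+i)" using 2 L by linarith
    have v: "(inv_word B @ w) ! (N + (L - 1 - (a+i))) = w ! (L - 1 - (a+i))"
      using nth_append_length_plus[of "inv_word B" w] lB by simp
    have r: "(B @ inv_word w) ! (a+i) = inv_word w ! (a+i-N)" using 2 lB by (simp add: nth_append)
    have r2: "inv_word w ! (a+i-N) = inv_letter (w ! (L - 1 - (a+i)))"
      using 2 L k by (simp add: inv_word_nth)
    show ?thesis unfolding x y v r r2 by simp
  next
    case 3
    have ai: "a + i < L + N" using a i by linarith
    have e1: "a + i = (a + i - L) + L" using 3 by linarith
    have xl: "a + i - L < N" using ai 3 by linarith
    have xL: "a + i - L < L" using xl L by linarith
    have x: "(a + i) mod L = a + i - L"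
    proof -
      have "(a + i) mod L = ((a + i - L) + L) mod L" using e1 by simp
      also have "\<dots> = a + i - L" using xL by simp
      finally show ?thesis .
    qed
    have e2: "L - 1 - i + N - a = N - 1 - (a + i - L)" using 3 ai L a i by linarith
    have "N - 1 - (a + i - L) < L" using xl L by linarith
    then have y: "(L - 1 - i + N - a) mod L = N - 1 - (a + i - L)" unfolding e2 by simp
    have v: "(inv_word B @ w) ! (N - 1 - (a + i - L)) = inv_letter (B ! (a + i - L))"
    proof -
      have "N - 1 - (a + i - L) < length (inv_word B)" using xl lB by simp
      then have "(inv_word B @ w) ! (N - 1 - (a + i - L)) = inv_word B ! (N - 1 - (a + i - L))"
        by (simp add: nth_append)
      also have "\<dots> = inv_letter (B ! (N - 1 - (N - 1 - (a + i - L))))"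
        using xl lB by (simp add: inv_word_nth)
      also have "N - 1 - (N - 1 - (a + i - L)) = a + i - L" using xl by linarith
      finally show ?thesis by simp
    qed
    have r: "(B @ inv_word w) ! (a + i - L) = B ! (a + i - L)" using xl lB by (simp add: nth_append)
    show ?thesis unfolding x y v r by simp
  qed
qed

lemma ar_step:
  fixes a b q A B n :: nat
  assumes h: "\<forall>i<q. Suc ((a + q - 1 - i) div A + (b + i) div B) = n"
  shows "\<forall>i. 1 \<le> i \<longrightarrow> i < q \<longrightarrow> (B dvd b + i \<longleftrightarrow> A dvd a + q - i)"
proof (intro allI impI)
  fix i assume i: "1 \<le> i" "i < q"
  obtain i' where i': "i = Suc i'" using i by (cases i) auto
  have h1: "Suc ((a + q - 1 - i') div A + (b + i') div B) = n" using h i i' by simp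
  have h2: "Suc ((a + q - 1 - i) div A + (b + i) div B) = n" using h i by simp
  have e1: "a + q - 1 - i' = Suc (a + q - 1 - i)" using i i' by linarith
  have e2: "b + i = Suc (b + i')" using i' by simp
  have d1: "(a + q - 1 - i') div A = (if Suc (a + q - 1 - i) mod A = 0 then Suc ((a + q - 1 - i) div A) else (a + q - 1 - i) div A)"
    unfolding e1 by (rule div_Suc)
  have d2: "(b + i) div B = (if Suc (b + i') mod B = 0 then Suc ((b + i') div B) else (b + i') div B)"
    unfolding e2 by (rule div_Suc)
  have e3: "Suc (a + q - 1 - i) = a + q - i" using i by linarith
  have "(Suc (a + q - 1 - i) mod A = 0) = (Suc (b + i') mod B = 0)"
    using h1 h2 d1 d2 by (auto split: if_splits)
  then show "B dvd b + i \<longleftrightarrow> A dvd a + q - i" using e2 e3 by (simp add: dvd_eq_mod_eq_0)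
qed

lemma ar_first:
  fixes b B :: nat
  assumes "0 < B"
  shows "1 \<le> B - b mod B \<and> B - b mod B \<le> B \<and> B dvd b + (B - b mod B)"
proof -
  have m: "b mod B < B" using assms by simp
  have "b + (B - b mod B) = B * (b div B) + B" 
  proof -
    have "B * (b div B) + b mod B = b" by (rule mult_div_mod_eq)
    then show ?thesis using m by linarith
  qed
  then have "B dvd b + (B - b mod B)" by simp
  then show ?thesis using m by simp
qed

lemma ar_X:
  fixes a b q A B :: nat
  assumes st: "\<forall>i. 1 \<le> i \<longrightarrow> i < q \<longrightarrow> (B dvd b + i \<longleftrightarrow> A dvd a + q - i)"
    and q: "2 * B + 1 \<le> q" and A0: "0 < A" and B0: "0 < B"
  shows "A = B"
proof -
  define i1 where "i1 = B - b mod B"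
  have i1: "1 \<le> i1" "i1 \<le> B" "B dvd b + i1" using ar_first[OF B0] unfolding i1_def by auto
  define i2 where "i2 = i1 + B"
  have i2: "1 \<le> i2" "i2 < q" "B dvd b + i2" using i1 q unfolding i2_def by (auto simp: add.assoc[symmetric])
  have a1: "A dvd a + q - i1" using st i1 i2 unfolding i2_def by auto
  have a2: "A dvd a + q - i2" using st i2 by auto
  have "(a + q - i1) - (a + q - i2) = B" using i2 unfolding i2_def by linarith
  then have AB: "A dvd B" using dvd_diff_nat[OF a1 a2] by simp
  then have "A \<le> B" using B0 by (simp add: dvd_imp_le)
  moreover have "\<not> A < B"
  proof
    assume AB': "A < B"
    define i3 where "i3 = i1 + A"
    have i3: "1 \<le> i3" "i3 < q" using i1 q AB' unfolding i3_def by linarith+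
    have "a + q - i3 = (a + q - i1) - A" using i3 unfolding i3_def by linarith
    then have "A dvd a + q - i3" using dvd_diff_nat[OF a1 dvd_refl[of A]] by simp
    then have "B dvd b + i3" using st i3 by auto
    then have "B dvd (b + i1) + A" unfolding i3_def by (simp add: add.assoc)
    then have "B dvd A" using i1(3) by (simp add: dvd_add_right_iff)
    then show False using AB' A0 by (simp add: nat_dvd_not_less)
  qed
  ultimately show ?thesis by simp
qed

lemma arith_core:
  fixes a b q A B n :: nat
  assumes h: "\<forall>i<q. Suc ((a + q - 1 - i) div A + (b + i) div B) = n" and A0: "0 < A" and B0: "0 < B"
  shows "(q \<le> 2*A \<and> q \<le> 2*B) \<or> (A = B \<and> a + b + q = n * A)"
proof (cases "q \<le> 2*A \<and> q \<le> 2*B")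
  case True then show ?thesis by simp
next
  case False
  have st: "\<forall>i. 1 \<le> i \<longrightarrow> i < q \<longrightarrow> (B dvd b + i \<longleftrightarrow> A dvd a + q - i)" using ar_step[OF h] .
  have st': "\<forall>i. 1 \<le> i \<longrightarrow> i < q \<longrightarrow> (A dvd a + i \<longleftrightarrow> B dvd b + q - i)"
  proof (intro allI impI)
    fix i assume i: "1 \<le> i" "i < q"
    have "1 \<le> q - i" "q - i < q" using i by auto
    then have "B dvd b + (q - i) \<longleftrightarrow> A dvd a + q - (q - i)" using st by blast
    moreover have "a + q - (q - i) = a + i" "b + (q - i) = b + q - i" using i by auto
    ultimately show "A dvd a + i \<longleftrightarrow> B dvd b + q - i" by simp
  qed
  have AB: "A = B"
  proof (cases "2 * B + 1 \<le> q")
    case True then show ?thesis using ar_X[OF st True A0 B0] by simp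
  next
    case False
    then have "2 * A + 1 \<le> q" using \<open>\<not> (q \<le> 2*A \<and> q \<le> 2*B)\<close> by linarith
    then show ?thesis using ar_X[OF st' _ B0 A0] by simp
  qed
  define i1 where "i1 = B - b mod B"
  have i1: "1 \<le> i1" "i1 \<le> B" "B dvd b + i1" using ar_first[OF B0] unfolding i1_def by auto
  have i1q: "i1 < q" using i1 False AB by linarith
  have a1: "A dvd a + q - i1" using st i1 i1q by auto
  obtain u where u: "a + q - i1 = A * u" using a1 by blast
  obtain v where v: "b + i1 = A * v" using i1(3) AB by blast
  have u1: "1 \<le> u" using u i1q by (cases u) auto
  have "a + q - 1 - i1 = A * (u - 1) + (A - 1)" using u u1 A0
    by (simp add: diff_mult_distrib2)
  moreover have "(A * (u - 1) + (A - 1)) div A = u - 1"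
  proof -
    have "((A - 1) + (u - 1) * A) div A = (u - 1) + (A - 1) div A" using div_mult_self1[of A "A - 1" "u - 1"] A0 by simp
    then show ?thesis using A0 by (simp add: add.commute mult.commute)
  qed
  ultimately have du: "(a + q - 1 - i1) div A = u - 1" by simp
  have dv: "(b + i1) div B = v" using v AB A0 by simp
  have "Suc ((a + q - 1 - i1) div A + (b + i1) div B) = n" using h i1q by simp
  then have "n = u + v" using du dv u1 by simp
  then have "n * A = A * u + A * v" by (simp add: algebra_simps)
  also have "\<dots> = a + b + q" using u v i1q by linarith
  finally have nA: "n * A = a + b + q" .
  show ?thesis using AB nA by simp
qed

locale SC =
  fixes n :: nat and l1 :: real
    and enum :: "nat \<Rightarrow> letter list" and Rs :: "nat \<Rightarrow> letter list set"
    and dfd :: "nat \<Rightarrow> bool" and ws :: "nat \<Rightarrow> letter list" and ms :: "nat \<Rightarrow> nat"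
    and D :: "'d set" and rv nx :: "'d \<Rightarrow> 'd" and lab :: "'d \<Rightarrow> letter" and FD :: "'d set"
  assumes n63: "63 \<le> n"
    and l1pos: "0 < l1" and l1lt: "l1 < 1"
    and l1bd: "(4 + 2 * real n * l1 / (1 - l1)) * l1 \<le> 1 / real n"
    and sc: "standing_construction n l1 enum Rs dfd ws ms"
    and dg: "is_diagram n (\<Union>i. Rs i) D rv nx lab FD"
    and wr: "weakly_reduced D rv nx lab FD"
begin

lemma l1n: "4 * l1 * real n \<le> 1"
proof -
  define X where "X = 2 * real n * l1 / (1 - l1)"
  have "0 \<le> X" unfolding X_def using l1pos l1lt by (intro divide_nonneg_nonneg mult_nonneg_nonneg) auto
  then have "0 \<le> X * l1" using l1pos by (intro mult_nonneg_nonneg) auto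
  moreover have "(4 + X) * l1 = 4 * l1 + X * l1" by (simp add: distrib_right)
  ultimately have "4 * l1 \<le> (4 + X) * l1" by linarith
  then have "4 * l1 \<le> 1 / real n" using l1bd unfolding X_def by linarith
  moreover have "0 < real n" using n63 by simp
  ultimately show ?thesis by (simp add: pos_le_divide_eq)
qed

lemma scD: "Rs 0 = {}" "\<not> dfd 0"
  "\<And>i. 0 < i \<Longrightarrow> all_regular n (Rs (i - 1)) \<Longrightarrow> \<not> dfd i \<and> Rs i = Rs (i - 1)"
  "\<And>i. 0 < i \<Longrightarrow> \<not> all_regular n (Rs (i - 1)) \<Longrightarrow>
           dfd i \<and>
           candidate n (Rs (i - 1)) (ws i) \<and>
           0 < ms i \<and>
           (\<forall>j<i. dfd j \<longrightarrow> ms i \<noteq> ms j) \<and>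
           real (length (ws i)) \<le> l1 * real (n * ms i + length (ws i)) \<and>
           Rs i = insert (relator n (ms i) (ws i)) (Rs (i - 1))"
  using sc unfolding standing_construction_def by auto

lemma Rs_rel: "r \<in> Rs i \<Longrightarrow> \<exists>j. dfd j \<and> r = relator n (ms j) (ws j)"
proof (induction i)
  case 0 then show ?case using scD(1) by simp
next
  case (Suc i)
  show ?case
  proof (cases "all_regular n (Rs i)")
    case True
    then have "Rs (Suc i) = Rs i" using scD(3)[of "Suc i"] by simp
    then show ?thesis using Suc by simp
  next
    case False
    then have "dfd (Suc i) \<and> Rs (Suc i) = insert (relator n (ms (Suc i)) (ws (Suc i))) (Rs i)"
      using scD(4)[of "Suc i"] by simp
    then show ?thesis using Suc by auto
  qed
qed

lemma dfd_pos: "dfd j \<Longrightarrow> 0 < j" using scD(2) by (cases j) auto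

lemma dfd_facts:
  assumes "dfd j"
  shows "candidate n (Rs (j - 1)) (ws j) \<and> 0 < ms j \<and>
         real (length (ws j)) \<le> l1 * real (n * ms j + length (ws j))"
proof -
  have j: "0 < j" using dfd_pos assms by simp
  have "\<not> all_regular n (Rs (j - 1))" using scD(3)[OF j] assms by blast
  then show ?thesis using scD(4)[OF j] by blast
qed

lemma ws_facts:
  assumes "dfd j"
  shows "ws j \<noteq> [] \<and> fst (hd (ws j)) \<noteq> 1 \<and> fst (last (ws j)) \<noteq> n"
proof -
  have c: "candidate n (Rs (j - 1)) (ws j)" using dfd_facts assms by blast
  have "ws j \<noteq> []"
  proof
    assume e: "ws j = []"
    have "regular_word n []"
      unfolding regular_word_def by (rule exI[of _ "\<lambda>_. 0"]) (simp add: gen_pow_def)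
    moreover have "grp_eq (Rs (j - 1)) [] []" unfolding grp_eq_def by simp
    moreover have "\<not> (\<exists>v. regular_word n v \<and> grp_eq (Rs (j - 1)) (ws j) v)"
      using c unfolding candidate_def by (elim conjE)
    ultimately show False using e by auto
  qed
  moreover have "ws j \<noteq> [] \<longrightarrow> fst (hd (ws j)) \<noteq> 1 \<and> fst (last (ws j)) \<noteq> n"
    using c unfolding candidate_def by (elim conjE)
  ultimately show ?thesis by simp
qed

lemma ms_inj: "dfd i \<Longrightarrow> dfd j \<Longrightarrow> ms i = ms j \<Longrightarrow> i = j"
proof -
  have *: "dfd i \<Longrightarrow> dfd j \<Longrightarrow> i < j \<Longrightarrow> ms i \<noteq> ms j" for i j
  proof -
    assume a: "dfd i" "dfd j" "i < j"
    have j: "0 < j" using a by simp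
    have "\<not> all_regular n (Rs (j - 1))" using scD(3)[OF j] a by blast
    then show ?thesis using scD(4)[OF j] a by auto
  qed
  assume "dfd i" "dfd j" "ms i = ms j"
  then show "i = j" using *[of i j] *[of j i] by (metis linorder_neqE_nat)
qed

lemma mapD: "finite D" "\<And>e. e \<in> D \<Longrightarrow> rv e \<in> D \<and> rv (rv e) = e" "inj_on nx D" "nx ` D \<subseteq> D"
  "FD \<subseteq> D" "\<And>e. e \<in> FD \<Longrightarrow> nx e \<in> FD"
  using dg unfolding is_diagram_def is_map_def bij_betw_def by auto

lemma labD: "e \<in> D \<Longrightarrow> lab (rv e) = inv_letter (lab e)"
  using dg unfolding is_diagram_def by auto

lemma faceD: "e \<in> FD \<Longrightarrow> \<exists>e'\<in>orbit nx e.
        map lab (cyc_path nx e' (card (orbit nx e))) \<in> (\<Union>i. Rs i) \<union> inv_word ` (\<Union>i. Rs i)"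
  using dg unfolding is_diagram_def by auto

lemma orb: "e \<in> D \<Longrightarrow> 0 < card (orbit nx e) \<and> (nx ^^ card (orbit nx e)) e = e"
  using orbit_props[OF mapD(1,3,4)] by blast

lemma pow_D: "e \<in> D \<Longrightarrow> (nx ^^ k) e \<in> D"
  using funpow_inD[OF mapD(4)] by blast

lemma pow_FD: "e \<in> FD \<Longrightarrow> (nx ^^ k) e \<in> FD"
  by (induction k) (auto simp: mapD(6))

lemma orb_pow[simp]: "(nx ^^ t) e \<in> orbit nx e"
  unfolding orbit_def by blast

lemma orb_self[simp]: "e \<in> orbit nx e"
  using orb_pow[of 0 e] by simp

lemma orb_mem: "e \<in> D \<Longrightarrow> e' \<in> orbit nx e \<Longrightarrow> \<exists>t < card (orbit nx e). e' = (nx ^^ t) e"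
proof -
  assume e: "e \<in> D" "e' \<in> orbit nx e"
  then obtain k where k: "e' = (nx ^^ k) e" unfolding orbit_def by blast
  have o: "0 < card (orbit nx e)" "(nx ^^ card (orbit nx e)) e = e" using orb e by auto
  have "e' = (nx ^^ (k mod card (orbit nx e))) e" using funpow_mod_eq[OF o(2)] k by simp
  then show ?thesis using o(1) by (intro exI[of _ "k mod card (orbit nx e)"]) simp
qed

lemma per: "e \<in> D \<Longrightarrow> (nx ^^ (x mod card (orbit nx e))) e = (nx ^^ x) e"
proof -
  assume e: "e \<in> D"
  have "(nx ^^ card (orbit nx e)) e = e" using orb[OF e] by simp
  then show ?thesis by (rule funpow_mod_eq)
qed

lemma per_add: "e \<in> D \<Longrightarrow> (nx ^^ (x + card (orbit nx e))) e = (nx ^^ x) e"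
  using orb by (simp add: funpow_add)

lemma orb_eq: "e \<in> D \<Longrightarrow> e' \<in> orbit nx e \<Longrightarrow> orbit nx e' = orbit nx e"
proof -
  assume e: "e \<in> D" "e' \<in> orbit nx e"
  then obtain t where t: "e' = (nx ^^ t) e" unfolding orbit_def by blast
  define L where "L = card (orbit nx e)"
  have L0: "0 < L" using orb e unfolding L_def by auto
  show ?thesis
  proof
    show "orbit nx e' \<subseteq> orbit nx e"
    proof
      fix x assume "x \<in> orbit nx e'"
      then obtain k where "x = (nx ^^ k) e'" unfolding orbit_def by blast
      then have "x = (nx ^^ (k + t)) e" unfolding t by (simp add: funpow_add)
      then show "x \<in> orbit nx e" by simp
    qed
  next
    show "orbit nx e \<subseteq> orbit nx e'"
    proof
      fix x assume "x \<in> orbit nx e"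
      then obtain k where k: "x = (nx ^^ k) e" unfolding orbit_def by blast
      have "(k + L * t) mod L = k mod L" by simp
      then have "(nx ^^ k) e = (nx ^^ (k + L * t)) e"
        using per[OF e(1), of k] per[OF e(1), of "k + L*t"] unfolding L_def by metis
      also have "k + L * t = (k + L * t - t) + t" using L0 by (simp add: trans_le_add2)
      also have "(nx ^^ ((k + L * t - t) + t)) e = (nx ^^ (k + L * t - t)) e'"
        unfolding t by (simp add: funpow_add)
      finally show "x \<in> orbit nx e'" unfolding k by simp
    qed
  qed
qed

lemma orb_sym: "e \<in> D \<Longrightarrow> e' \<in> orbit nx e \<Longrightarrow> e \<in> orbit nx e'"
proof -
  assume "e \<in> D" "e' \<in> orbit nx e"
  then have "orbit nx e' = orbit nx e" by (rule orb_eq)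
  then show "e \<in> orbit nx e'" using orb_self[of e] by simp
qed

lemma lab_per: "e \<in> D \<Longrightarrow> lab ((nx ^^ x) e) = map lab (cyc_path nx e (card (orbit nx e))) ! (x mod card (orbit nx e))"
proof -
  assume e: "e \<in> D"
  have "0 < card (orbit nx e)" using orb e by simp
  then have "x mod card (orbit nx e) < card (orbit nx e)" by simp
  then show ?thesis using per[OF e] by simp
qed

end

context SC begin

definition gl :: "bool \<Rightarrow> nat \<Rightarrow> letter" where
  "gl \<sigma> a = (if \<sigma> then (Suc a, True) else (n - a, False))"

definition FACE :: "'d \<Rightarrow> nat \<Rightarrow> bool \<Rightarrow> nat \<Rightarrow> bool" where
  "FACE b M \<sigma> j \<longleftrightarrow> b \<in> FD \<and> dfd j \<and> ms j = M \<and>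
     card (orbit nx b) = n * M + length (ws j) \<and>
     map lab (cyc_path nx b (card (orbit nx b))) =
       (if \<sigma> then relator n M (ws j) else inv_word (block_word n M) @ ws j)"

lemma snd_gl[simp]: "snd (gl \<sigma> a) = \<sigma>"
  by (simp add: gl_def)

lemma gl_inj: "inj_on (gl \<sigma>) {..<n}"
  by (rule inj_onI) (auto simp: gl_def split: if_splits)

lemma blockg: "map (\<lambda>x. gl \<sigma> (x div m)) [0..<n*m] = (if \<sigma> then block_word n m else inv_word (block_word n m))"
  by (cases \<sigma>) (simp add: gl_def block_word_map, simp add: gl_def inv_block_map)

lemma FACE_D: "FACE b M \<sigma> j \<Longrightarrow> b \<in> D"
  using mapD(5) unfolding FACE_def by blast

lemma face_num:
  assumes "FACE b M \<sigma> j"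
  shows "card (orbit nx b) = n * M + length (ws j) \<and> 1 \<le> length (ws j) \<and> 0 < M \<and>
         4 * n * length (ws j) \<le> card (orbit nx b) \<and>
         real (length (ws j)) \<le> l1 * real (card (orbit nx b))"
proof -
  have f: "dfd j" "ms j = M" "card (orbit nx b) = n * M + length (ws j)"
    using assms unfolding FACE_def by auto
  have w: "ws j \<noteq> []" using ws_facts f by blast
  have d: "0 < ms j" "real (length (ws j)) \<le> l1 * real (n * ms j + length (ws j))"
    using dfd_facts[OF f(1)] by auto
  define k where "k = length (ws j)"
  define L where "L = card (orbit nx b)"
  have kL: "real k \<le> l1 * real L" using d f unfolding k_def L_def by simp
  have "4 * real n * real k \<le> 4 * real n * (l1 * real L)"
    using kL by (intro mult_left_mono) auto
  also have "\<dots> = (4 * l1 * real n) * real L" by (simp add: algebra_simps)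
  also have "\<dots> \<le> 1 * real L" using l1n by (intro mult_right_mono) auto
  finally have "real (4 * n * k) \<le> real L" by simp
  then have "4 * n * k \<le> L" by (simp only: of_nat_le_iff)
  then show ?thesis using f w d kL unfolding k_def L_def by (simp add: Suc_leI)
qed

lemma face_lab:
  assumes "FACE b M \<sigma> j" "x < n * M"
  shows "lab ((nx ^^ x) b) = gl \<sigma> (x div M)"
proof -
  have f: "card (orbit nx b) = n * M + length (ws j)"
    "map lab (cyc_path nx b (card (orbit nx b))) =
       (if \<sigma> then relator n M (ws j) else inv_word (block_word n M) @ ws j)"
    using assms unfolding FACE_def by auto
  have xL: "x < card (orbit nx b)" using f assms by simp
  have "lab ((nx ^^ x) b) = map lab (cyc_path nx b (card (orbit nx b))) ! x" using xL by simp
  also have "\<dots> = (if \<sigma> then block_word n M else inv_word (block_word n M)) ! x"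
    unfolding f(2) relator_def using assms(2) by (simp add: nth_append)
  also have "\<dots> = map (\<lambda>x. gl \<sigma> (x div M)) [0..<n*M] ! x" unfolding blockg by simp
  also have "\<dots> = gl \<sigma> (x div M)" using assms(2) by simp
  finally show ?thesis .
qed

lemma face_last:
  assumes "FACE b M \<sigma> j"
  shows "lab ((nx ^^ (card (orbit nx b) - 1)) b) \<noteq> gl \<sigma> 0"
proof -
  have f: "card (orbit nx b) = n * M + length (ws j)"
    "map lab (cyc_path nx b (card (orbit nx b))) =
       (if \<sigma> then relator n M (ws j) else inv_word (block_word n M) @ ws j)"
    "dfd j"
    using assms unfolding FACE_def by auto
  define w where "w = ws j"
  have wf: "w \<noteq> []" "fst (hd w) \<noteq> 1" "fst (last w) \<noteq> n" using ws_facts[OF f(3)] unfolding w_def by auto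
  define L where "L = card (orbit nx b)"
  have lw: "1 \<le> length w" using wf by (cases w) auto
  have L1: "L - 1 < L" "L - 1 = n*M + (length w - 1)" using f lw unfolding L_def w_def by auto
  have "lab ((nx ^^ (L - 1)) b) = map lab (cyc_path nx b L) ! (L - 1)" using L1 by simp
  also have "\<dots> = (if \<sigma> then inv_word w else w) ! (length w - 1)"
    unfolding L_def f(2) relator_def L1(2)[unfolded L_def] w_def
    by (simp add: nth_append_length_plus[of "block_word n M", simplified]
        nth_append_length_plus[of "inv_word (block_word n M)", simplified])
  finally have e: "lab ((nx ^^ (L - 1)) b) = (if \<sigma> then inv_word w else w) ! (length w - 1)" .
  show ?thesis
  proof (cases \<sigma>)
    case True
    have "inv_word w ! (length w - 1) = inv_letter (hd w)"
      using wf by (simp add: inv_word_nth hd_conv_nth)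
    then show ?thesis using e True wf unfolding L_def gl_def by (auto simp: prod_eq_iff)
  next
    case False
    have "w ! (length w - 1) = last w" using wf by (simp add: last_conv_nth)
    then show ?thesis using e False wf unfolding L_def gl_def by (auto simp: prod_eq_iff)
  qed
qed

end

context SC begin

lemma face_exists:
  assumes e: "e \<in> FD"
  shows "\<exists>b M \<sigma> j. FACE b M \<sigma> j \<and> b \<in> orbit nx e"
proof -
  have eD: "e \<in> D" using e mapD(5) by blast
  obtain e' where e': "e' \<in> orbit nx e"
    and lst: "map lab (cyc_path nx e' (card (orbit nx e))) \<in> (\<Union>i. Rs i) \<union> inv_word ` (\<Union>i. Rs i)"
    using faceD[OF e] by blast
  have oe: "orbit nx e' = orbit nx e" using orb_eq[OF eD e'] .
  define L where "L = card (orbit nx e)"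
  have e'FD: "e' \<in> FD" using e' e pow_FD unfolding orbit_def by blast
  have e'D: "e' \<in> D" using e'FD mapD(5) by blast
  have per': "(nx ^^ L) e' = e'" using orb[OF e'D] oe unfolding L_def by simp
  have lenL: "length (map lab (cyc_path nx e' L)) = L" by simp
  from lst consider (pos) r i where "r \<in> Rs i" "map lab (cyc_path nx e' L) = r"
    | (neg) r i where "r \<in> Rs i" "map lab (cyc_path nx e' L) = inv_word r"
    unfolding L_def by blast
  then show ?thesis
  proof cases
    case pos
    obtain j where j: "dfd j" "r = relator n (ms j) (ws j)" using Rs_rel[OF pos(1)] by blast
    have "card (orbit nx e') = n * ms j + length (ws j)"
      using lenL pos(2) j(2) oe unfolding L_def by (simp add: relator_def)
    then have "FACE e' (ms j) True j"
      unfolding FACE_def using e'FD j pos(2) oe unfolding L_def by simp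
    then show ?thesis using e' by blast
  next
    case neg
    obtain j where j: "dfd j" "r = relator n (ms j) (ws j)" using Rs_rel[OF neg(1)] by blast
    define w where "w = ws j"
    define M where "M = ms j"
    have ir: "inv_word r = w @ inv_word (block_word n M)"
      unfolding j(2) relator_def w_def M_def by (simp add: inv_word_append)
    define b where "b = (nx ^^ length w) e'"
    have bFD: "b \<in> FD" unfolding b_def using pow_FD e'FD by blast
    have ob: "orbit nx b = orbit nx e" unfolding b_def
      using orb_eq[OF e'D orb_pow[of "length w" e']] oe by simp
    have cL: "card (orbit nx b) = L" using ob unfolding L_def by simp
    have "map lab (cyc_path nx b L) = rotate (length w) (map lab (cyc_path nx e' L))"
      unfolding b_def cyc_rot[OF per'] by (simp add: rotate_map)
    also have "\<dots> = inv_word (block_word n M) @ w" unfolding neg(2) ir by (rule rotate_append)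
    finally have m: "map lab (cyc_path nx b L) = inv_word (block_word n M) @ w" .
    have "L = n * M + length w" using arg_cong[OF m, of length] by simp
    then have "FACE b M False j" unfolding FACE_def using bFD j cL m unfolding w_def M_def by simp
    moreover have "b \<in> orbit nx e" using ob orb_self[of b] by simp
    ultimately show ?thesis by blast
  qed
qed

lemma half_bound:
  assumes "real l > real n / (2 * real n - 2) * real L"
  shows "L < 2 * l"
proof -
  have n2: "0 < 2 * real n - 2" using n63 by simp
  have "real L / 2 \<le> real n / (2 * real n - 2) * real L"
  proof -
    have "1 / 2 \<le> real n / (2 * real n - 2)" using n2 by (simp add: field_simps)
    then have "1/2 * real L \<le> real n / (2 * real n - 2) * real L" by (rule mult_right_mono) simp
    then show ?thesis by simp
  qed
  then have "real L < 2 * real l" using assms by linarith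
  then show ?thesis by linarith
qed

lemma face_big:
  assumes "FACE b M \<sigma> j"
  shows "real (n * M) > real n / (2 * real n - 2) * real (card (orbit nx b))"
    and "real (n * M) \<ge> (1 - l1) * real (card (orbit nx b))"
proof -
  define k where "k = length (ws j)"
  define L where "L = card (orbit nx b)"
  have f: "L = n * M + k" "1 \<le> k" "0 < M" "4 * n * k \<le> L" "real k \<le> l1 * real L"
    using face_num[OF assms] unfolding k_def L_def by auto
  have "k < M"
  proof (rule ccontr)
    assume "\<not> k < M"
    then have "n * M \<le> n * k" by simp
    then have "4 * n * k \<le> n * k + k" using f by linarith
    moreover have "n * k \<ge> k" using n63 by simp
    moreover have "4 * n * k = n * k + n * k + n * k + n * k" by simp
    ultimately have "n * k = 0" by linarith
    then show False using n63 f by simp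
  qed
  have "1 \<le> n - 2" using n63 by linarith
  then have "M * 1 \<le> M * (n - 2)" by (rule mult_le_mono2)
  then have "M \<le> M * (n - 2)" by simp
  then have LM: "L < M * (2 * n - 2)" using f \<open>k < M\<close> by (simp add: algebra_simps diff_mult_distrib2)
  have n2: "0 < 2 * real n - 2" using n63 by simp
  have "real L < real M * (2 * real n - 2)"
  proof -
    have "real L < real (M * (2 * n - 2))" using LM by (simp only: of_nat_less_iff)
    also have "real (M * (2 * n - 2)) = real M * (2 * real n - 2)" using n63 by (simp add: of_nat_diff)
    finally show ?thesis .
  qed
  then have "real n * real L < real n * (real M * (2 * real n - 2))" using n63 by simp
  then have "real n * real L / (2 * real n - 2) < real n * real M"
    using n2 by (simp add: pos_divide_less_eq algebra_simps)
  then show "real (n * M) > real n / (2 * real n - 2) * real (card (orbit nx b))"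
    unfolding L_def by (simp add: algebra_simps)
  have "real (n * M) = real L - real k" using f by simp
  also have "\<dots> \<ge> real L - l1 * real L" using f by simp
  finally show "real (n * M) \<ge> (1 - l1) * real (card (orbit nx b))"
    unfolding L_def by (simp add: algebra_simps)
qed

end

context SC begin

lemma window_face:
  assumes F: "FACE b M \<sigma> j" and e0: "e0 \<in> orbit nx b"
    and lL: "l \<le> card (orbit nx b)"
    and big: "real l > real n / (2 * real n - 2) * real (card (orbit nx b))"
    and wl: "map lab (cyc_path nx e0 l) = map (\<lambda>x. gl \<tau> (x div m)) [0..<n*m]"
  shows "e0 = b \<and> m = M \<and> \<tau> = \<sigma> \<and> l = n * m"
proof -
  have bD: "b \<in> D" using FACE_D[OF F] .
  define L where "L = card (orbit nx b)"
  define k where "k = length (ws j)"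
  have f: "L = n * M + k" "1 \<le> k" "0 < M" "4 * n * k \<le> L"
    using face_num[OF F] unfolding k_def L_def by auto
  have lnm: "l = n * m" using arg_cong[OF wl, of length] by simp
  have L2l: "L < 2 * l" using half_bound[OF big] unfolding L_def .
  obtain t where t: "t < L" "e0 = (nx ^^ t) b" using orb_mem[OF bD e0] unfolding L_def by blast
  define c where "c x = lab ((nx ^^ x) b)" for x
  have cw: "\<forall>i<n*m. c ((t+i) mod L) = gl \<tau> (i div m)"
  proof (intro allI impI)
    fix i assume i: "i < n*m"
    have "map lab (cyc_path nx e0 l) ! i = lab ((nx ^^ i) e0)" using i lnm by simp
    also have "\<dots> = lab ((nx ^^ (t + i)) b)" unfolding t(2) by (simp add: funpow_add add.commute)
    also have "\<dots> = c ((t+i) mod L)" unfolding c_def L_def using per[OF bD] by simp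
    finally show "c ((t+i) mod L) = gl \<tau> (i div m)" using wl i by simp
  qed
  have cb: "\<forall>x<n*M. c x = gl \<sigma> (x div M)" unfolding c_def using face_lab[OF F] by blast
  have L0: "0 < L" using orb[OF bD] unfolding L_def by simp
  have m0: "0 < m" using L2l L0 lnm by (cases m) auto
  have nk: "k \<le> n * k" using n63 by simp
  have nMM: "3 * M \<le> n * M" using n63 by (intro mult_le_mono1) simp
  have c1: "n*M < L" using f by simp
  have c2: "L - n*M < n*m" using f nk L2l lnm by linarith
  have c3: "M < n*m" using nMM f L2l lnm by linarith
  have c4: "n*m \<le> L" using lL lnm unfolding L_def by simp
  show ?thesis
  proof (cases "\<tau> = \<sigma>")
    case False
    have "False"
    proof (rule window_count[of "n*M" "\<lambda>z. snd z = \<sigma>" c "n*m" t L])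
      show "\<forall>x<n*M. snd (c x) = \<sigma>" using cb by simp
      show "\<forall>i<n*m. \<not> snd (c ((t+i) mod L)) = \<sigma>" using cw False by simp
    qed (use c2 c4 in auto)
    then show ?thesis ..
  next
    case True
    have cl: "c (L - 1) \<noteq> gl \<sigma> 0" using face_last[OF F] unfolding c_def L_def .
    have "t = 0 \<and> m = M"
      by (rule window_unique[of n M c "gl \<sigma>" m t L])
        (use cb cw True gl_inj cl n63 c3 c4 c2 c1 t f m0 in auto)
    then show ?thesis using t True lnm by simp
  qed
qed

lemma window_face':
  assumes F: "FACE b M \<sigma> j" and e0: "e0 \<in> orbit nx b"
    and lL: "l \<le> card (orbit nx b)"
    and big: "real l > real n / (2 * real n - 2) * real (card (orbit nx b))"
    and wl: "map lab (cyc_path nx e0 l) = block_word n m \<or> map lab (cyc_path nx e0 l) = inv_word (block_word n m)"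
  shows "e0 = b \<and> m = M \<and> l = n * m"
proof -
  obtain \<tau> where "map lab (cyc_path nx e0 l) = map (\<lambda>x. gl \<tau> (x div m)) [0..<n*m]"
    using wl blockg[of True m] blockg[of False m] by (metis (full_types))
  then show ?thesis using window_face[OF F e0 lL big] by blast
qed

lemma sel_struct:
  assumes "p \<in> special_sel n nx lab FD"
  shows "\<exists>b M \<sigma> jj a q. FACE b M \<sigma> jj \<and> 0 < q \<and> a + q \<le> n * M \<and> p = cyc_path nx ((nx ^^ a) b) q"
proof -
  obtain e l m a q where e: "e \<in> FD" "l \<le> card (orbit nx e)"
    "real l > real n / (2 * real n - 2) * real (card (orbit nx e))"
    "map lab (cyc_path nx e l) = block_word n m \<or> map lab (cyc_path nx e l) = inv_word (block_word n m)"
    "0 < q" "a + q \<le> l" "p = cyc_path nx ((nx ^^ a) e) q"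
    using assms unfolding special_sel_def by blast
  obtain b M \<sigma> jj where F: "FACE b M \<sigma> jj" "b \<in> orbit nx e" using face_exists[OF e(1)] by blast
  have eD: "e \<in> D" using e(1) mapD(5) by blast
  have ob: "orbit nx b = orbit nx e" using orb_eq[OF eD F(2)] .
  have eb: "e \<in> orbit nx b" using ob by simp
  have "e = b \<and> m = M \<and> l = n * m"
    using window_face'[OF F(1) eb] e(2,3,4) ob by simp
  then show ?thesis using F e by blast
qed

lemma contour_orbit:
  assumes "p \<in> contour_subpaths nx e" "e \<in> D" "b \<in> D" "0 < q" "p = cyc_path nx ((nx ^^ a) b) q"
  shows "orbit nx e = orbit nx b"
proof -
  obtain e' q' where e': "e' \<in> orbit nx e" "0 < q'" "p = cyc_path nx e' q'"
    using assms(1) unfolding contour_subpaths_def by blast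
  have "p ! 0 = e'" using e' by simp
  moreover have "p ! 0 = (nx ^^ a) b" using assms by simp
  ultimately have "(nx ^^ a) b \<in> orbit nx e" using e' by simp
  then have "orbit nx ((nx ^^ a) b) = orbit nx e" by (rule orb_eq[OF assms(2)])
  moreover have "orbit nx ((nx ^^ a) b) = orbit nx b" by (rule orb_eq[OF assms(3) orb_pow])
  ultimately show ?thesis by simp
qed

end

context SC begin

lemma inv_path_nth: "i < length p \<Longrightarrow> inv_path rv p ! i = rv (p ! (length p - 1 - i))"
  unfolding inv_path_def by (simp add: rev_nth)

lemma pow_pow: "(nx ^^ i) ((nx ^^ j) e) = (nx ^^ (i + j)) e"
  by (simp add: funpow_add)

lemma face_list:
  assumes F: "FACE b M \<sigma> j"
  shows "map lab (cyc_path nx b (n*M)) = map (\<lambda>x. gl \<sigma> (x div M)) [0..<n*M]"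
  by (rule nth_equalityI) (simp_all add: face_lab[OF F])

lemma wr_contra:
  assumes F1: "FACE b1 M True j" and F2: "FACE b2 M False j" and a: "a < n * M"
    and r: "rv ((nx ^^ a) b1) = (nx ^^ (n * M - a - 1)) b2"
  shows False
proof -
  have b1D: "b1 \<in> D" and b2D: "b2 \<in> D" using FACE_D F1 F2 by auto
  have b1FD: "b1 \<in> FD" and b2FD: "b2 \<in> FD" using F1 F2 unfolding FACE_def by auto
  define L where "L = card (orbit nx b1)"
  define w where "w = ws j"
  have L2: "card (orbit nx b2) = L" using face_num[OF F1] face_num[OF F2] unfolding L_def by simp
  have LL: "L = n * M + length w" using face_num[OF F1] unfolding L_def w_def by simp
  have L0: "0 < L" using orb[OF b1D] unfolding L_def by simp
  have R1': "map lab (cyc_path nx b1 (card (orbit nx b1))) = (if True then relator n M (ws j) else inv_word (block_word n M) @ ws j)"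
    using F1 unfolding FACE_def by blast
  have R1: "map lab (cyc_path nx b1 L) = block_word n M @ inv_word w"
    using R1' unfolding L_def w_def relator_def by simp
  have R2': "map lab (cyc_path nx b2 (card (orbit nx b2))) = (if False then relator n M (ws j) else inv_word (block_word n M) @ ws j)"
    using F2 unfolding FACE_def by blast
  have R2: "map lab (cyc_path nx b2 L) = inv_word (block_word n M) @ w"
    using R2' L2 unfolding w_def by simp
  have dist: "orbit nx b1 \<noteq> orbit nx b2"
  proof
    assume eq: "orbit nx b1 = orbit nx b2"
    have b2o: "b2 \<in> orbit nx b1" using eq by simp
    have "b2 = b1 \<and> M = M \<and> False = True \<and> n * M = n * M"
      by (rule window_face[OF F1 b2o _ face_big(1)[OF F1] face_list[OF F2]])
        (use LL L_def in simp)
    then show False by simp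
  qed
  define e1 where "e1 = (nx ^^ a) b1"
  define e2 where "e2 = (nx ^^ (n * M - a)) b2"
  have e1FD: "e1 \<in> FD" "e2 \<in> FD" unfolding e1_def e2_def using pow_FD b1FD b2FD by auto
  have e1D: "e1 \<in> D" using e1FD mapD(5) by blast
  have o1: "orbit nx e1 = orbit nx b1" unfolding e1_def by (rule orb_eq[OF b1D orb_pow])
  have o2: "orbit nx e2 = orbit nx b2" unfolding e2_def by (rule orb_eq[OF b2D orb_pow])
  define p1 where "p1 = cyc_path nx e1 L"
  define p2 where "p2 = inv_path rv (cyc_path nx e2 L)"
  have lp2: "length p2 = L" unfolding p2_def inv_path_def by simp
  have p2nth: "p2 ! i = rv ((nx ^^ (L - 1 - i + (n * M - a))) b2)" if "i < L" for i
  proof -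
    have "p2 ! i = rv (cyc_path nx e2 L ! (L - 1 - i))" unfolding p2_def using inv_path_nth[of i "cyc_path nx e2 L"] that by simp
    also have "\<dots> = rv ((nx ^^ (L - 1 - i)) e2)" using that by simp
    finally show ?thesis unfolding e2_def pow_pow .
  qed
  have hd1: "hd p1 = e1"
  proof -
    have "length p1 = L" unfolding p1_def by simp
    then have "p1 \<noteq> []" using L0 by auto
    then have "hd p1 = p1 ! 0" by (simp add: hd_conv_nth)
    then show ?thesis unfolding p1_def using L0 by simp
  qed
  have hd2: "hd p2 = e1"
  proof -
    have "p2 \<noteq> []" using lp2 L0 by auto
    then have "hd p2 = p2 ! 0" by (simp add: hd_conv_nth)
    also have "\<dots> = rv ((nx ^^ (L - 1 + (n * M - a))) b2)" using p2nth[of 0] L0 by simp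
    also have "L - 1 + (n * M - a) = (n * M - a - 1) + card (orbit nx b2)" using L2 L0 a by linarith
    also have "(nx ^^ ((n * M - a - 1) + card (orbit nx b2))) b2 = (nx ^^ (n * M - a - 1)) b2"
      by (rule per_add[OF b2D])
    also have "\<dots> = rv e1" using r unfolding e1_def by simp
    also have "rv (rv e1) = e1" using mapD(2)[OF e1D] by simp
    finally show ?thesis .
  qed
  have labs: "map lab p1 = map lab p2"
  proof (rule nth_equalityI)
    show "length (map lab p1) = length (map lab p2)" using lp2 unfolding p1_def by simp
  next
    fix i assume "i < length (map lab p1)"
    then have i: "i < L" unfolding p1_def by simp
    have "map lab p1 ! i = lab ((nx ^^ (i + a)) b1)" using i unfolding p1_def e1_def by (simp add: pow_pow)
    also have "\<dots> = lab ((nx ^^ (a + i)) b1)" by (simp add: add.commute)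
    also have "\<dots> = (block_word n M @ inv_word w) ! ((a + i) mod L)"
      using lab_per[OF b1D] R1 unfolding L_def by simp
    also have "\<dots> = inv_letter ((inv_word (block_word n M) @ w) ! ((L - 1 - i + n * M - a) mod L))"
      using wr_list_identity[of "block_word n M" "n*M" L w a i] LL a i by simp
    also have "L - 1 - i + n * M - a = L - 1 - i + (n * M - a)" using a by simp
    also have "(inv_word (block_word n M) @ w) ! ((L - 1 - i + (n * M - a)) mod L) = lab ((nx ^^ (L - 1 - i + (n * M - a))) b2)"
      using lab_per[OF b2D] R2 L2 by simp
    also have "inv_letter \<dots> = lab (p2 ! i)" using p2nth[OF i] labD[OF pow_D[OF b2D]] by simp
    finally show "map lab p1 ! i = map lab p2 ! i" using i lp2 by simp
  qed
  have "\<exists>e1\<in>FD. \<exists>e2\<in>FD. orbit nx e1 \<noteq> orbit nx e2 \<and>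
          (let p1 = cyc_path nx e1 (card (orbit nx e1));
               p2 = inv_path rv (cyc_path nx e2 (card (orbit nx e2)))
           in p1 \<noteq> [] \<and> p2 \<noteq> [] \<and> hd p1 = hd p2 \<and> map lab p1 = map lab p2)"
  proof (intro bexI)
    show "orbit nx e1 \<noteq> orbit nx e2 \<and>
          (let p1 = cyc_path nx e1 (card (orbit nx e1));
               p2 = inv_path rv (cyc_path nx e2 (card (orbit nx e2)))
           in p1 \<noteq> [] \<and> p2 \<noteq> [] \<and> hd p1 = hd p2 \<and> map lab p1 = map lab p2)"
    proof -
      have c1: "card (orbit nx e1) = L" using o1 unfolding L_def by simp
      have c2: "card (orbit nx e2) = L" using o2 L2 by simp
      have "length p1 = L" unfolding p1_def by simp
      then have "p1 \<noteq> []" using L0 by auto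
      moreover have "p2 \<noteq> []" using L0 lp2 by (cases p2) auto
      ultimately show ?thesis unfolding Let_def c1 c2 p1_def[symmetric] p2_def[symmetric]
        using hd1 hd2 labs dist o1 o2 by simp
    qed
  qed (use e1FD in auto)
  then show False using wr unfolding weakly_reduced_def by blast
qed

lemma B2core:
  assumes F1: "FACE b1 M1 True j1" and F2: "FACE b2 M2 False j2"
    and p: "p = cyc_path nx ((nx ^^ a) b1) q" and ip: "inv_path rv p = cyc_path nx ((nx ^^ a') b2) q"
    and q0: "0 < q" and aq: "a + q \<le> n * M1" and aq': "a' + q \<le> n * M2"
  shows "q \<le> 2 * M1 \<and> q \<le> 2 * M2"
proof -
  have b1D: "b1 \<in> D" and b2D: "b2 \<in> D" using FACE_D F1 F2 by auto
  have M10: "0 < M1" and M20: "0 < M2" using face_num F1 F2 by auto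
  have key: "inv_path rv p ! i = rv ((nx ^^ (a + q - 1 - i)) b1)" if "i < q" for i
  proof -
    have "inv_path rv p ! i = rv (p ! (q - 1 - i))" using inv_path_nth[of i p] that p by simp
    moreover have "q - 1 - i + a = a + q - 1 - i" using that by linarith
    moreover have "(nx ^^ (q - 1 - i)) ((nx ^^ a) b1) = (nx ^^ (q - 1 - i + a)) b1" by (simp add: funpow_add)
    ultimately show ?thesis using that p by simp
  qed
  have h: "\<forall>i<q. Suc ((a + q - 1 - i) div M1 + (a' + i) div M2) = n"
  proof (intro allI impI)
    fix i assume i: "i < q"
    have x1: "a + q - 1 - i < n * M1" using i aq by linarith
    have x2: "a' + i < n * M2" using i aq' by linarith
    have "lab (inv_path rv p ! i) = lab ((nx ^^ (i + a')) b2)" unfolding ip using i by (simp add: pow_pow)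
    also have "\<dots> = lab ((nx ^^ (a' + i)) b2)" by (simp add: add.commute)
    also have "\<dots> = gl False ((a' + i) div M2)" using face_lab[OF F2 x2] .
    finally have A: "lab (inv_path rv p ! i) = (n - (a' + i) div M2, False)" by (simp add: gl_def)
    have "lab (inv_path rv p ! i) = inv_letter (lab ((nx ^^ (a + q - 1 - i)) b1))"
      using key[OF i] labD[OF pow_D[OF b1D]] by simp
    also have "\<dots> = inv_letter (gl True ((a + q - 1 - i) div M1))" using face_lab[OF F1 x1] by simp
    finally have B: "lab (inv_path rv p ! i) = (Suc ((a + q - 1 - i) div M1), False)" by (simp add: gl_def inv_letter_def)
    have "(a' + i) div M2 < n" using div_lt_n[OF M20 x2] .
    then show "Suc ((a + q - 1 - i) div M1 + (a' + i) div M2) = n" using A B by simp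
  qed
  show ?thesis
  proof (cases "q \<le> 2*M1 \<and> q \<le> 2*M2")
    case True then show ?thesis .
  next
    case False
    then have al: "M1 = M2" "a + a' + q = n * M1" using arith_core[OF h M10 M20] by auto
    have d: "dfd j1" "ms j1 = M1" "dfd j2" "ms j2 = M2" using F1 F2 unfolding FACE_def by auto
    have jj: "j1 = j2" using ms_inj[OF d(1) d(3)] d al by simp
    have F2': "FACE b2 M1 False j1" using F2 al jj by simp
    have "inv_path rv p ! (q - 1) = rv ((nx ^^ a) b1)" using key[of "q-1"] q0 by simp
    moreover have "inv_path rv p ! (q - 1) = (nx ^^ (a' + q - 1)) b2"
    proof -
      have "inv_path rv p ! (q - 1) = (nx ^^ (q - 1 + a')) b2" unfolding ip using q0 by (simp add: pow_pow)
      moreover have "q - 1 + a' = a' + q - 1" using q0 by linarith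
      ultimately show ?thesis by simp
    qed
    moreover have "a' + q - 1 = n * M1 - a - 1" using al q0 by linarith
    ultimately have "rv ((nx ^^ a) b1) = (nx ^^ (n * M1 - a - 1)) b2" by simp
    moreover have "a < n * M1" using aq q0 by linarith
    ultimately show ?thesis using wr_contra[OF F1 F2'] by blast
  qed
qed

end

context SC begin

lemma sel_in_face:
  assumes F: "FACE b M \<sigma> j" and e: "e \<in> FD" and be: "b \<in> orbit nx e"
    and pS: "p \<in> special_sel n nx lab FD" and pC: "p \<in> contour_subpaths nx e"
  shows "is_subpath p (cyc_path nx b (n * M))"
proof -
  obtain b' M' \<sigma>' jj a q where F': "FACE b' M' \<sigma>' jj" and q: "0 < q" "a + q \<le> n * M'"
    and p: "p = cyc_path nx ((nx ^^ a) b') q"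
    using sel_struct[OF pS] by blast
  have eD: "e \<in> D" using e mapD(5) by blast
  have bD: "b \<in> D" using FACE_D[OF F] .
  have b'D: "b' \<in> D" using FACE_D[OF F'] .
  have o1: "orbit nx e = orbit nx b'" using contour_orbit[OF pC eD b'D q(1) p] .
  have o2: "orbit nx b = orbit nx e" using orb_eq[OF eD be] .
  have b'b: "b' \<in> orbit nx b" using o1 o2 by simp
  have cc: "card (orbit nx b') = card (orbit nx b)" using o1 o2 by simp
  have A: "n * M' \<le> card (orbit nx b)" using face_num[OF F'] cc by simp
  have B: "real n / (2 * real n - 2) * real (card (orbit nx b)) < real (n * M')"
    using face_big(1)[OF F'] cc by simp
  have "b' = b \<and> M' = M \<and> \<sigma>' = \<sigma> \<and> n * M' = n * M'"
    using window_face[OF F b'b A B face_list[OF F']] by simp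
  then have "b' = b" "M' = M" by simp_all
  then show ?thesis using p q cyc_sub[of a q "n * M" nx b] by simp
qed

lemma inv_inv_path:
  assumes "set p \<subseteq> D" shows "inv_path rv (inv_path rv p) = p"
proof -
  have "map (rv \<circ> rv) p = map id p" using assms mapD(2) by (intro map_cong) auto
  then show ?thesis unfolding inv_path_def by (simp add: rev_map)
qed

lemma cyc_in_D: "b \<in> D \<Longrightarrow> set (cyc_path nx b q) \<subseteq> D"
  unfolding cyc_path_def using pow_D by auto

lemma B2_bound:
  assumes F: "FACE b M \<sigma> j" and e: "e \<in> FD" and o: "orbit nx e = orbit nx b"
    and q: "q \<le> 2 * M"
  shows "real q \<le> 2 / real n * real (card (orbit nx e))"
proof -
  have "card (orbit nx e) \<ge> n * M" using face_num[OF F] o by simp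
  moreover have "n * q \<le> n * (2 * M)" using q by (rule mult_le_mono2)
  ultimately have "n * q \<le> 2 * card (orbit nx e)" by linarith
  then have "real (n * q) \<le> real (2 * card (orbit nx e))" by (simp only: of_nat_le_iff)
  then have "real n * real q \<le> 2 * real (card (orbit nx e))" by simp
  then show ?thesis using n63 by (simp add: field_simps)
qed

lemma main: "cond_B l1 (2 / real n) D rv nx FD (special_sel n nx lab FD)"
  unfolding cond_B_def
proof (intro ballI conjI)
  fix e assume e: "e \<in> FD"
  let ?S = "special_sel n nx lab FD"
  obtain b M \<sigma> j where F: "FACE b M \<sigma> j" and be: "b \<in> orbit nx e" using face_exists[OF e] by blast
  have eD: "e \<in> D" using e mapD(5) by blast
  have bFD: "b \<in> FD" using F unfolding FACE_def by simp
  have ob: "orbit nx b = orbit nx e" using orb_eq[OF eD be] .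
  define s where "s = cyc_path nx b (n * M)"
  have nM0: "0 < n * M" using face_num[OF F] n63 by simp
  have nML: "n * M \<le> card (orbit nx b)" using face_num[OF F] by simp
  have sS: "s \<in> ?S"
    unfolding special_sel_def s_def
  proof (intro CollectI bexI exI conjI)
    show "b \<in> FD" by (rule bFD)
    show "n * M \<le> card (orbit nx b)" by (rule nML)
    show "real (n * M) > real n / (2 * real n - 2) * real (card (orbit nx b))" by (rule face_big(1)[OF F])
    show "map lab (cyc_path nx b (n * M)) = block_word n M \<or>
          map lab (cyc_path nx b (n * M)) = inv_word (block_word n M)"
      using face_list[OF F] blockg[of \<sigma> M] by (cases \<sigma>) auto
    show "0 < n * M" by (rule nM0)
    show "0 + n * M \<le> n * M" by simp
    show "cyc_path nx b (n * M) = cyc_path nx ((nx ^^ 0) b) (n * M)" by simp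
  qed
  have sC: "s \<in> contour_subpaths nx e"
    unfolding contour_subpaths_def s_def using be nM0 nML ob by (intro CollectI exI[of _ b] exI[of _ "n*M"]) auto
  show "\<exists>p. p \<in> ?S \<and> p \<in> contour_subpaths nx e" using sS sC by blast
  have maxs: "p = s" if "p \<in> ?S \<and> p \<in> contour_subpaths nx e \<and>
      \<not> (\<exists>p'. p' \<in> ?S \<and> p' \<in> contour_subpaths nx e \<and> p' \<noteq> p \<and> is_subpath p p')" for p
  proof (rule ccontr)
    assume ne: "p \<noteq> s"
    have "is_subpath p s" unfolding s_def using sel_in_face[OF F e be] that by blast
    then show False using that sS sC ne by blast
  qed
  show "\<forall>p q. (p \<in> ?S \<and> p \<in> contour_subpaths nx e \<and>
                 \<not> (\<exists>p'. p' \<in> ?S \<and> p' \<in> contour_subpaths nx e \<and> p' \<noteq> p \<and> is_subpath p p')) \<and>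
               (q \<in> ?S \<and> q \<in> contour_subpaths nx e \<and>
                 \<not> (\<exists>q'. q' \<in> ?S \<and> q' \<in> contour_subpaths nx e \<and> q' \<noteq> q \<and> is_subpath q q'))
               \<longrightarrow> p = q"
    using maxs by blast
  show "\<exists>p. p \<in> ?S \<and> p \<in> contour_subpaths nx e \<and>
             real (length p) \<ge> (1 - l1) * real (card (orbit nx e))"
    using sS sC face_big(2)[OF F] ob unfolding s_def by auto
  show "\<forall>p. oriented_arc D rv nx p \<and> p \<in> ?S \<and> inv_path rv p \<in> ?S \<and>
             (p \<in> contour_subpaths nx e \<or> inv_path rv p \<in> contour_subpaths nx e)
             \<longrightarrow> real (length p) \<le> 2 / real n * real (card (orbit nx e))"
  proof (intro allI impI)
    fix p assume hp: "oriented_arc D rv nx p \<and> p \<in> ?S \<and> inv_path rv p \<in> ?S \<and>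
             (p \<in> contour_subpaths nx e \<or> inv_path rv p \<in> contour_subpaths nx e)"
    obtain b1 M1 \<sigma>1 j1 a1 q1 where F1: "FACE b1 M1 \<sigma>1 j1" and q1: "0 < q1" "a1 + q1 \<le> n * M1"
      and p1: "p = cyc_path nx ((nx ^^ a1) b1) q1" using sel_struct hp by blast
    obtain b2 M2 \<sigma>2 j2 a2 q2 where F2: "FACE b2 M2 \<sigma>2 j2" and q2: "0 < q2" "a2 + q2 \<le> n * M2"
      and p2: "inv_path rv p = cyc_path nx ((nx ^^ a2) b2) q2" using sel_struct hp by blast
    have b1D: "b1 \<in> D" using FACE_D[OF F1] .
    have b2D: "b2 \<in> D" using FACE_D[OF F2] .
    have qq: "q2 = q1" using arg_cong[OF p2, of length] p1 unfolding inv_path_def by simp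
    have lp: "length p = q1" using p1 by simp
    have sig: "\<sigma>2 = (\<not> \<sigma>1)"
    proof -
      have x1: "a1 + (q1 - 1) < n * M1" using q1 by linarith
      have x2: "a2 < n * M2" using q2 by linarith
      have "inv_path rv p ! 0 = rv (p ! (q1 - 1))" using inv_path_nth[of 0 p] lp q1 by simp
      also have "\<dots> = rv ((nx ^^ (q1 - 1 + a1)) b1)" using p1 q1 by (simp add: pow_pow)
      finally have "lab (inv_path rv p ! 0) = inv_letter (lab ((nx ^^ (a1 + (q1 - 1))) b1))"
        using labD[OF pow_D[OF b1D]] by (simp add: add.commute)
      then have A: "snd (lab (inv_path rv p ! 0)) = (\<not> \<sigma>1)" using face_lab[OF F1 x1] by simp
      have "inv_path rv p ! 0 = (nx ^^ a2) b2" using p2 q2 by simp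
      then have "snd (lab (inv_path rv p ! 0)) = \<sigma>2" using face_lab[OF F2 x2] by simp
      then show ?thesis using A by simp
    qed
    have bounds: "q1 \<le> 2 * M1 \<and> q1 \<le> 2 * M2"
    proof (cases \<sigma>1)
      case True
      then have F1': "FACE b1 M1 True j1" and F2': "FACE b2 M2 False j2" using F1 F2 sig by simp_all
      show ?thesis by (rule B2core[OF F1' F2' p1 p2[unfolded qq] q1(1) q1(2) q2(2)[unfolded qq]])
    next
      case False
      then have F1': "FACE b1 M1 False j1" and F2': "FACE b2 M2 True j2" using F1 F2 sig by simp_all
      have ii: "inv_path rv (inv_path rv p) = p" using inv_inv_path cyc_in_D[OF pow_D[OF b1D]] p1 by simp
      have "q1 \<le> 2 * M2 \<and> q1 \<le> 2 * M1"
        by (rule B2core[OF F2' F1' p2[unfolded qq], unfolded ii, OF p1 q1(1) q2(2)[unfolded qq] q1(2)])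
      then show ?thesis by simp
    qed
    show "real (length p) \<le> 2 / real n * real (card (orbit nx e))"
    proof (cases "p \<in> contour_subpaths nx e")
      case True
      have "orbit nx e = orbit nx b1" using contour_orbit[OF True eD b1D q1(1) p1] .
      then show ?thesis using B2_bound[OF F1 e] bounds lp by simp
    next
      case False
      then have "inv_path rv p \<in> contour_subpaths nx e" using hp by blast
      then have "orbit nx e = orbit nx b2" using contour_orbit[OF _ eD b2D q2(1) p2] by blast
      then show ?thesis using B2_bound[OF F2 e] bounds lp by simp
    qed
  qed
qed

end

theorem proposition5p1:
  fixes n :: nat and l1 :: real
    and enum :: "nat \<Rightarrow> letter list" and Rs :: "nat \<Rightarrow> letter list set"
    and dfd :: "nat \<Rightarrow> bool" and ws :: "nat \<Rightarrow> letter list" and ms :: "nat \<Rightarrow> nat"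
    and D :: "'d set" and rv nx :: "'d \<Rightarrow> 'd" and lab :: "'d \<Rightarrow> letter" and FD :: "'d set"
  assumes "63 \<le> n"
    and "0 < l1" and "l1 < 1"
    and "(4 + 2 * real n * l1 / (1 - l1)) * l1 \<le> 1 / real n"
    and "standing_construction n l1 enum Rs dfd ws ms"
    and "is_diagram n (\<Union>i. Rs i) D rv nx lab FD"
    and "weakly_reduced D rv nx lab FD"
  shows "cond_B l1 (2 / real n) D rv nx FD (special_sel n nx lab FD)"
proof -
  interpret SC n l1 enum Rs dfd ws ms D rv nx lab FD
    using assms by unfold_locales
  show ?thesis by (rule main)
qed

end
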